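(* With $\tau=(\sigma_{n-1}\cdots\sigma_1)^n\in B_n$, \[\Phi(\tau)=\sum_{k=0}^{n-1}q^{n(n-1-2k)}\pi_k\] as endomorphisms of $V^{\otimes n}$.
   Context: Let $U=U_q(\mathfrak{gl}(1|1))$ be the unital superalgebra over $\mathbb{C}(q)$ generated by odd elements $E,F$ and even elements $\mathbf q^h$ ($h\in P^*=\mathbb{Z}h_1\oplus\mathbb{Z}h_2$) with relations $\mathbf q^0=1$, $\mathbf q^h\mathbf q^{h'}=\mathbf q^{h+h'}$, $\mathbf q^hE=q^{\langle h,\alpha\rangle}E\mathbf q^h$, $\mathbf q^hF=q^{-\langle h,\alpha\rangle}F\mathbf q^h$, $EF+FE=\frac{K-K^{-1}}{q-q^{-1}}$ with $K=\mathbf q^{h_1+h_2}$, $E^2=F^2=0$; here $P=\mathbb{Z}\epsilon_1\oplus\mathbb{Z}\epsilon_2$ with $\{\epsilon_1,\epsilon_2\}$ dual to $\{h_1,h_2\}$ and $\alpha=\epsilon_1-\epsilon_2$. Comultiplication: $\Delta(E)=E\otimes K^{-1}+1\otimes E$, $\Delta(F)=F\otimes1+K\otimes F$, $\Delta(\mathbf q^h)=\mathbf q^h\otimes\mathbf q^h$; on tensor products one uses the Koszul sign rule $(X\otimes Y)(a\otimes b)=(-1)^{|Y||a|}Xa\otimes Yb$. $V$ has basis $v_0$ (even), $v_1$ (odd) with $Ev_0=0,Ev_1=v_0,Fv_0=v_1,Fv_1=0$, $\mathbf q^hv_0=q^{\langle h,\epsilon_1\rangle}v_0$, $\mathbf q^hv_1=q^{\langle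 h,\epsilon_2\rangle}v_1$. Fix $n\ge2$; $U$ acts on $V^{\otimes n}$ via iterated comultiplication. For $0\le k\le n-1$, $H_k=\{v\in V^{\otimes n}: Ev=0,\ \mathbf q^hv=q^{\langle h,(n-k)\epsilon_1+k\epsilon_2\rangle}v\ \forall h\in P^*\}$ and $W_k=H_k\oplus F(H_k)$; one has $V^{\otimes n}=\bigoplus_{k=0}^{n-1}W_k$, and $\pi_k:V^{\otimes n}\to V^{\otimes n}$ denotes the projection onto $W_k$ along this decomposition. Braid action: $\check R:V\otimes V\to V\otimes V$ is given by $\check R(v_0\otimes v_0)=qv_0\otimes v_0$, $\check R(v_1\otimes v_0)=v_0\otimes v_1$, $\check R(v_0\otimes v_1)=v_1\otimes v_0+(q-q^{-1})v_0\otimes v_1$, $\check R(v_1\otimes v_1)=-q^{-1}v_1\otimes v_1$; $\Phi(\sigma_t)=\mathrm{id}^{\otimes(t-1)}\otimes\check R\otimes\mathrm{id}^{\otimes(n-t-1)}$ defines an action $\Phi:B_n\to\mathrm{End}_U(V^{\otimes n})$. *)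

theory Defs
  imports Complex_Main "HOL-Computational_Algebra.Polynomial" "HOL-Computational_Algebra.Fraction_Field"
begin

type_synonym K = "complex poly fract"

definition qq :: K where "qq = Fract [:0, 1:] 1"

text \<open>Basis of V: False = v0 (even), True = v1 (odd).  A basis vector of
  V tensor n is a bool list of length n; vectors are coefficient functions on bool
  lists, required to vanish outside length n.\<close>
type_synonym vec = "bool list \<Rightarrow> K"

definition Vn :: "nat \<Rightarrow> vec set" where
  "Vn n = {v. \<forall>w. length w \<noteq> n \<longrightarrow> v w = 0}"

definition basis :: "nat \<Rightarrow> bool list set" where
  "basis n = {w. length w = n}"

text \<open>Operators on V: matrix (output, input) together with a parity (True = odd).\<close>
type_synonym op1 = "(bool \<Rightarrow> bool \<Rightarrow> K) \<times> bool"

definition E1 :: op1 where "E1 = ((\<lambda>y x. if y = False \<and> x = True then 1 else 0), True)"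
definition F1 :: op1 where "F1 = ((\<lambda>y x. if y = True \<and> x = False then 1 else 0), True)"
text \<open>q^h for h = a h1 + b h2: v0 |-> q^a v0, v1 |-> q^b v1.\<close>
definition qh1 :: "int \<Rightarrow> int \<Rightarrow> op1" where
  "qh1 a b = ((\<lambda>y x. if y = x then (if x then qq powi b else qq powi a) else 0), False)"
definition K1 :: op1 where "K1 = qh1 1 1"
definition Kinv1 :: op1 where "Kinv1 = qh1 (-1) (-1)"
definition id1 :: op1 where "id1 = qh1 0 0"

text \<open>Action of a pure tensor X_1 \<otimes> ... \<otimes> X_n on a basis vector with the Koszul
  sign rule: (X_1\<otimes>..\<otimes>X_n)(a_1\<otimes>..\<otimes>a_n) = (-1)^(sum_{i<j} |X_j||a_i|) X_1 a_1\<otimes>..\<otimes>X_n a_n.\<close>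
definition tens_mat :: "op1 list \<Rightarrow> bool list \<Rightarrow> bool list \<Rightarrow> K" where
  "tens_mat Xs u w =
     (-1) ^ card {(i, j). i < j \<and> j < length Xs \<and> snd (Xs ! j) \<and> w ! i}
     * (\<Prod>j<length Xs. fst (Xs ! j) (u ! j) (w ! j))"

definition tens_app :: "op1 list \<Rightarrow> vec \<Rightarrow> vec" where
  "tens_app Xs v = (\<lambda>u. if length u = length Xs
      then (\<Sum>w\<in>basis (length Xs). tens_mat Xs u w * v w) else 0)"

text \<open>An element of U tensor n, written as a list of pure tensors (to be summed).\<close>
definition sum_app :: "op1 list list \<Rightarrow> vec \<Rightarrow> vec" where
  "sum_app Ts v = (\<lambda>u. \<Sum>X\<leftarrow>Ts. tens_app X v u)"

text \<open>Iterated comultiplication Delta^(n) = (Delta^(n-1) \<otimes> id) o Delta, with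
  Delta(E) = E\<otimes>K^-1 + 1\<otimes>E, Delta(F) = F\<otimes>1 + K\<otimes>F, Delta(q^h) = q^h\<otimes>q^h.\<close>
fun DeltaE :: "nat \<Rightarrow> op1 list list" where
  "DeltaE 0 = []"
| "DeltaE (Suc 0) = [[E1]]"
| "DeltaE (Suc (Suc m)) = map (\<lambda>t. t @ [Kinv1]) (DeltaE (Suc m)) @ [replicate (Suc m) id1 @ [E1]]"

fun DeltaF :: "nat \<Rightarrow> op1 list list" where
  "DeltaF 0 = []"
| "DeltaF (Suc 0) = [[F1]]"
| "DeltaF (Suc (Suc m)) = map (\<lambda>t. t @ [id1]) (DeltaF (Suc m)) @ [replicate (Suc m) K1 @ [F1]]"

definition Eop :: "nat \<Rightarrow> vec \<Rightarrow> vec" where "Eop n = sum_app (DeltaE n)"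
definition Fop :: "nat \<Rightarrow> vec \<Rightarrow> vec" where "Fop n = sum_app (DeltaF n)"
definition qhop :: "nat \<Rightarrow> int \<Rightarrow> int \<Rightarrow> vec \<Rightarrow> vec" where
  "qhop n a b = tens_app (replicate n (qh1 a b))"

definition smult_vec :: "K \<Rightarrow> vec \<Rightarrow> vec" where "smult_vec c v = (\<lambda>w. c * v w)"

text \<open>H_k: highest weight vectors of weight (n-k) eps1 + k eps2; for h = a h1 + b h2,
  <h, (n-k) eps1 + k eps2> = a(n-k) + b k.\<close>
definition H :: "nat \<Rightarrow> nat \<Rightarrow> vec set" where
  "H n k = {v \<in> Vn n. Eop n v = (\<lambda>_. 0) \<and>
     (\<forall>a b. qhop n a b v = smult_vec (qq powi (a * (int n - int k) + b * int k)) v)}"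

definition W :: "nat \<Rightarrow> nat \<Rightarrow> vec set" where
  "W n k = {(\<lambda>w. x w + Fop n y w) | x y. x \<in> H n k \<and> y \<in> H n k}"

definition proj :: "nat \<Rightarrow> nat \<Rightarrow> vec \<Rightarrow> vec" where
  "proj n k v = (THE x. \<exists>ws. (\<forall>j<n. ws j \<in> W n j) \<and> v = (\<lambda>w. \<Sum>j<n. ws j w) \<and> x = ws k)"

text \<open>The R-matrix on V\<otimes>V, as matrix (output pair, input pair).\<close>
definition Rmat :: "bool \<times> bool \<Rightarrow> bool \<times> bool \<Rightarrow> K" where
  "Rmat out inp = (case inp of
      (False, False) \<Rightarrow> (if out = (False, False) then qq else 0)
    | (True, False) \<Rightarrow> (if out = (False, True) then 1 else 0)
    | (False, True) \<Rightarrow> (if out = (True, False) then 1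
                       else if out = (False, True) then qq - inverse qq else 0)
    | (True, True) \<Rightarrow> (if out = (True, True) then - inverse qq else 0))"

text \<open>Phi(sigma_t) = id^(t-1) \<otimes> R \<otimes> id^(n-t-1) (R is even, so no Koszul signs);
  it acts on tensor positions t and t+1 (1-indexed), i.e. list indices t-1 and t.\<close>
definition Phi_sigma :: "nat \<Rightarrow> nat \<Rightarrow> vec \<Rightarrow> vec" where
  "Phi_sigma n t v = (\<lambda>u. if length u = n then
      (\<Sum>w\<in>basis n. (if (\<forall>j<n. j \<noteq> t - 1 \<and> j \<noteq> t \<longrightarrow> u ! j = w ! j)
                      then Rmat (u ! (t - 1), u ! t) (w ! (t - 1), w ! t) else 0) * v w)
      else 0)"

text \<open>Phi(sigma_{n-1} ... sigma_1) = Phi(sigma_{n-1}) o ... o Phi(sigma_1).\<close>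
definition Phi_cyc :: "nat \<Rightarrow> vec \<Rightarrow> vec" where
  "Phi_cyc n = fold (\<lambda>t acc. Phi_sigma n t \<circ> acc) [1..<n] id"

definition Phi_tau :: "nat \<Rightarrow> vec \<Rightarrow> vec" where
  "Phi_tau n = Phi_cyc n ^^ n"

end

theory Submission
  imports Defs
begin


lemma two_K: "(2::K) \<noteq> 0"
proof -
  have "(of_nat 2 :: K) = Fract (of_nat 2) 1" by (rule of_nat_fract)
  moreover have "Fract (of_nat 2 :: complex poly) 1 \<noteq> Fract 0 1" by (simp add: eq_fract)
  ultimately show ?thesis by (simp add: Zero_fract_def)
qed

lemma eq_neg_K: "(X::K) = - X \<Longrightarrow> X = 0"
proof -
  assume h: "X = - X"
  have "X + X = X + - X" using h by (rule arg_cong[where f="\<lambda>y. X + y"])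
  hence "2 * X = 0" by (metis add.right_inverse mult_2)
  thus "X = 0" using two_K by simp
qed

lemma antisym_sum:
  assumes "finite S" "\<And>j k. j \<in> S \<Longrightarrow> k \<in> S \<Longrightarrow> a j k = - a k j"
  shows "(\<Sum>j\<in>S. \<Sum>k\<in>S. a j k) = (0::K)"
proof -
  let ?X = "(\<Sum>j\<in>S. \<Sum>k\<in>S. a j k)"
  have "?X = (\<Sum>k\<in>S. \<Sum>j\<in>S. a j k)" by (rule sum.swap)
  also have "\<dots> = (\<Sum>k\<in>S. \<Sum>j\<in>S. - a k j)"
    apply (rule sum.cong[OF refl])
    apply (rule sum.cong[OF refl])
    apply (rule assms(2))
    by assumption+
  also have "\<dots> = - ?X" by (simp add: sum_negf)
  finally show ?thesis by (rule eq_neg_K)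
qed

definition cnt :: "bool list \<Rightarrow> nat \<Rightarrow> nat" where "cnt u j = card {i. i < j \<and> u ! i}"
definition sg :: "bool list \<Rightarrow> nat \<Rightarrow> K" where "sg u j = (-1) ^ cnt u j"

lemma sg_sq: "sg u j * sg u j = 1"
  unfolding sg_def by (simp add: power_add[symmetric])

lemma cnt_upd_ge: "j \<le> k \<Longrightarrow> cnt (u[k:=x]) j = cnt u j"
  unfolding cnt_def by (rule arg_cong[where f=card]) (auto simp: nth_list_update)

lemma sg_upd_ge: "j \<le> k \<Longrightarrow> sg (u[k:=x]) j = sg u j"
  by (simp add: sg_def cnt_upd_ge)

lemma cnt_split: "k < j \<Longrightarrow> cnt u j = card {i. i < j \<and> i \<noteq> k \<and> u ! i} + (if u ! k then 1 else 0)"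
proof -
  assume kj: "k < j"
  have fin: "finite {i. i < j \<and> i \<noteq> k \<and> u ! i}" by auto
  show ?thesis
  proof (cases "u ! k")
    case True
    hence "{i. i < j \<and> u ! i} = insert k {i. i < j \<and> i \<noteq> k \<and> u ! i}" using kj by auto
    thus ?thesis using True fin unfolding cnt_def by simp
  next
    case False
    hence "{i. i < j \<and> u ! i} = {i. i < j \<and> i \<noteq> k \<and> u ! i}" by auto
    thus ?thesis using False unfolding cnt_def by simp
  qed
qed

lemma sg_upd_lt: "k < j \<Longrightarrow> k < length u \<Longrightarrow> sg (u[k:=x]) j = (if x = u ! k then sg u j else - sg u j)"
proof -
  assume kj: "k < j" and kl: "k < length u"
  have e: "{i. i < j \<and> i \<noteq> k \<and> u[k:=x] ! i} = {i. i < j \<and> i \<noteq> k \<and> u ! i}"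
    by (intro Collect_cong) (metis nth_list_update_neq)
  have c1: "cnt (u[k:=x]) j = card {i. i < j \<and> i \<noteq> k \<and> u ! i} + (if x then 1 else 0)"
    using cnt_split[OF kj, of "u[k:=x]"] unfolding e nth_list_update_eq[OF kl] .
  have c2: "cnt u j = card {i. i < j \<and> i \<noteq> k \<and> u ! i} + (if u!k then 1 else 0)"
    using cnt_split[OF kj, of u] by simp
  show ?thesis unfolding sg_def c1 c2 by (cases x; cases "u!k") (simp_all add: power_add)
qed

lemma sg_swap:
  assumes "j < length u" "k < length u" "j \<noteq> k" "x \<noteq> u ! j" "y \<noteq> u ! k"
  shows "sg u j * sg (u[j:=x]) k = - (sg u k * sg (u[k:=y]) j)"
proof (cases "j < k")
  case True
  thus ?thesis using assms by (simp add: sg_upd_lt sg_upd_ge)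
next
  case False
  hence "k < j" using assms by simp
  thus ?thesis using assms by (simp add: sg_upd_lt sg_upd_ge)
qed

lemma cnt_Suc: "cnt u (Suc a) = cnt u a + (if u ! a then 1 else 0)"
proof -
  have "cnt u (Suc a) = card {i. i < Suc a \<and> i \<noteq> a \<and> u ! i} + (if u ! a then 1 else 0)"
    by (rule cnt_split) simp
  moreover have "{i. i < Suc a \<and> i \<noteq> a \<and> u ! i} = {i. i < a \<and> u ! i}" by auto
  ultimately show ?thesis by (simp add: cnt_def)
qed

lemma sg_Suc: "sg u (Suc a) = (if u ! a then - sg u a else sg u a)"
  by (simp add: sg_def cnt_Suc)

lemma sg_0: "sg u 0 = 1" by (simp add: sg_def cnt_def)

definition wedge :: "nat \<Rightarrow> (nat \<Rightarrow> K) \<Rightarrow> vec \<Rightarrow> vec" where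
 "wedge n x v = (\<lambda>u. if length u = n then (\<Sum>j<n. if u!j then sg u j * x j * v (u[j:=False]) else 0) else 0)"
definition ctr :: "nat \<Rightarrow> (nat \<Rightarrow> K) \<Rightarrow> vec \<Rightarrow> vec" where
 "ctr n b v = (\<lambda>u. if length u = n then (\<Sum>j<n. if u!j then 0 else sg u j * b j * v (u[j:=True])) else 0)"

lemma wedge_app: "length u = n \<Longrightarrow> wedge n x v u = (\<Sum>j<n. if u!j then sg u j * x j * v (u[j:=False]) else 0)"
  by (simp add: wedge_def)
lemma wedge_app0: "length u \<noteq> n \<Longrightarrow> wedge n x v u = 0"
  by (simp add: wedge_def)
lemma ctr_app: "length u = n \<Longrightarrow> ctr n b v u = (\<Sum>j<n. if u!j then 0 else sg u j * b j * v (u[j:=True]))"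
  by (simp add: ctr_def)
lemma ctr_app0: "length u \<noteq> n \<Longrightarrow> ctr n b v u = 0"
  by (simp add: ctr_def)

lemma wedge_wedge: "wedge n x (wedge n x v) = (\<lambda>u. 0)"
proof
  fix u show "wedge n x (wedge n x v) u = 0"
  proof (cases "length u = n")
    case False thus ?thesis by (simp add: wedge_def)
  next
    case True
    define a where "a j k = (if u!j \<and> u!k \<and> j\<noteq>k then sg u j * sg (u[j:=False]) k * x j * x k * v (u[j:=False, k:=False]) else 0)" for j k
    have "wedge n x (wedge n x v) u = (\<Sum>j<n. if u!j then sg u j * x j * wedge n x v (u[j:=False]) else 0)"
      by (rule wedge_app[OF True])
    also have "\<dots> = (\<Sum>j<n. \<Sum>k<n. a j k)"
    proof (rule sum.cong[OF refl])
      fix j assume j: "j \<in> {..<n}"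
      show "(if u!j then sg u j * x j * wedge n x v (u[j:=False]) else 0) = (\<Sum>k<n. a j k)"
      proof (cases "u!j")
        case False thus ?thesis by (simp add: a_def)
      next
        case uj: True
        have "sg u j * x j * wedge n x v (u[j:=False]) =
           (\<Sum>k<n. sg u j * x j * (if u[j:=False]!k then sg (u[j:=False]) k * x k * v (u[j:=False, k:=False]) else 0))"
          using True by (simp add: wedge_app sum_distrib_left)
        also have "\<dots> = (\<Sum>k<n. a j k)"
        proof (rule sum.cong[OF refl])
          fix k assume k: "k \<in> {..<n}"
          show "sg u j * x j * (if u[j:=False]!k then sg (u[j:=False]) k * x k * v (u[j:=False, k:=False]) else 0) = a j k"
            using uj j k True unfolding a_def by (cases "k = j") (simp_all add: nth_list_update_neq)
        qed
        finally show ?thesis using uj by simp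
      qed
    qed
    also have "\<dots> = 0"
    proof (rule antisym_sum)
      fix j k assume j: "j \<in> {..<n}" and k: "k \<in> {..<n}"
      show "a j k = - a k j"
      proof (cases "u!j \<and> u!k \<and> j\<noteq>k")
        case False thus ?thesis by (auto simp: a_def)
      next
        case c: True
        have s: "sg u j * sg (u[j:=False]) k = - (sg u k * sg (u[k:=False]) j)"
          by (rule sg_swap) (use c j k True in auto)
        have w: "u[j:=False, k:=False] = u[k:=False, j:=False]" by (rule list_update_swap) (use c in auto)
        have 1: "a j k = (sg u j * sg (u[j:=False]) k) * (x j * x k * v (u[k:=False, j:=False]))"
          unfolding a_def w using c by (simp add: mult_ac)
        have 2: "a k j = (sg u k * sg (u[k:=False]) j) * (x j * x k * v (u[k:=False, j:=False]))"
          unfolding a_def using c by (simp add: mult_ac)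
        show ?thesis unfolding 1 2 s by simp
      qed
    qed simp
    finally show ?thesis .
  qed
qed

lemma ctr_ctr: "ctr n b (ctr n b v) = (\<lambda>u. 0)"
proof
  fix u show "ctr n b (ctr n b v) u = 0"
  proof (cases "length u = n")
    case False thus ?thesis by (simp add: ctr_def)
  next
    case True
    define a where "a j k = (if \<not> u!j \<and> \<not> u!k \<and> j\<noteq>k then sg u j * sg (u[j:=True]) k * b j * b k * v (u[j:=True, k:=True]) else 0)" for j k
    have "ctr n b (ctr n b v) u = (\<Sum>j<n. if u!j then 0 else sg u j * b j * ctr n b v (u[j:=True]))"
      by (rule ctr_app[OF True])
    also have "\<dots> = (\<Sum>j<n. \<Sum>k<n. a j k)"
    proof (rule sum.cong[OF refl])
      fix j assume j: "j \<in> {..<n}"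
      show "(if u!j then 0 else sg u j * b j * ctr n b v (u[j:=True])) = (\<Sum>k<n. a j k)"
      proof (cases "u!j")
        case True thus ?thesis by (simp add: a_def)
      next
        case uj: False
        have "sg u j * b j * ctr n b v (u[j:=True]) =
           (\<Sum>k<n. sg u j * b j * (if u[j:=True]!k then 0 else sg (u[j:=True]) k * b k * v (u[j:=True, k:=True])))"
          using True by (simp add: ctr_app sum_distrib_left)
        also have "\<dots> = (\<Sum>k<n. a j k)"
        proof (rule sum.cong[OF refl])
          fix k assume k: "k \<in> {..<n}"
          show "sg u j * b j * (if u[j:=True]!k then 0 else sg (u[j:=True]) k * b k * v (u[j:=True, k:=True])) = a j k"
            using uj j k True unfolding a_def by (cases "k = j") (simp_all add: nth_list_update_neq)
        qed
        finally show ?thesis using uj by simp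
      qed
    qed
    also have "\<dots> = 0"
    proof (rule antisym_sum)
      fix j k assume j: "j \<in> {..<n}" and k: "k \<in> {..<n}"
      show "a j k = - a k j"
      proof (cases "\<not> u!j \<and> \<not> u!k \<and> j\<noteq>k")
        case False thus ?thesis by (auto simp: a_def)
      next
        case c: True
        have s: "sg u j * sg (u[j:=True]) k = - (sg u k * sg (u[k:=True]) j)"
          by (rule sg_swap) (use c j k True in auto)
        have w: "u[j:=True, k:=True] = u[k:=True, j:=True]" by (rule list_update_swap) (use c in auto)
        have 1: "a j k = (sg u j * sg (u[j:=True]) k) * (b j * b k * v (u[k:=True, j:=True]))"
          unfolding a_def w using c by (simp add: mult_ac)
        have 2: "a k j = (sg u k * sg (u[k:=True]) j) * (b j * b k * v (u[k:=True, j:=True]))"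
          unfolding a_def using c by (simp add: mult_ac)
        show ?thesis unfolding 1 2 s by simp
      qed
    qed simp
    finally show ?thesis .
  qed
qed



lemma ctr_wedge:
  assumes v: "v \<in> Vn n"
  shows "ctr n b (wedge n x v) = (\<lambda>u. (\<Sum>i<n. b i * x i) * v u - wedge n x (ctr n b v) u)"
proof
  fix u show "ctr n b (wedge n x v) u = (\<Sum>i<n. b i * x i) * v u - wedge n x (ctr n b v) u"
  proof (cases "length u = n")
    case False thus ?thesis using v by (simp add: ctr_app0 wedge_app0 Vn_def)
  next
    case True
    define a1 where "a1 j k = (if \<not> u!j then sg u j * b j * (if u[j:=True]!k then sg (u[j:=True]) k * x k * v (u[j:=True, k:=False]) else 0) else 0)" for j k
    define a2 where "a2 k j = (if u!k then sg u k * x k * (if u[k:=False]!j then 0 else sg (u[k:=False]) j * b j * v (u[k:=False, j:=True])) else 0)" for k j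
    have L: "ctr n b (wedge n x v) u = (\<Sum>j<n. \<Sum>k<n. a1 j k)"
    proof -
      have "ctr n b (wedge n x v) u = (\<Sum>j<n. if u!j then 0 else sg u j * b j * wedge n x v (u[j:=True]))"
        by (rule ctr_app[OF True])
      also have "\<dots> = (\<Sum>j<n. \<Sum>k<n. a1 j k)"
        by (rule sum.cong[OF refl]) (simp add: a1_def wedge_app True sum_distrib_left)
      finally show ?thesis .
    qed
    have R: "wedge n x (ctr n b v) u = (\<Sum>j<n. \<Sum>k<n. a2 k j)"
    proof -
      have "wedge n x (ctr n b v) u = (\<Sum>k<n. if u!k then sg u k * x k * ctr n b v (u[k:=False]) else 0)"
        by (rule wedge_app[OF True])
      also have "\<dots> = (\<Sum>k<n. \<Sum>j<n. a2 k j)"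
      proof (rule sum.cong[OF refl])
        fix k assume k: "k \<in> {..<n}"
        show "(if u!k then sg u k * x k * ctr n b v (u[k:=False]) else 0) = (\<Sum>j<n. a2 k j)"
        proof (cases "u!k")
          case False thus ?thesis by (simp add: a2_def)
        next
          case c: True
          have "length (u[k:=False]) = n" using \<open>length u = n\<close> by simp
          from ctr_app[OF this] show ?thesis using c unfolding a2_def by (simp add: sum_distrib_left)
        qed
      qed
      also have "\<dots> = (\<Sum>j<n. \<Sum>k<n. a2 k j)" by (rule sum.swap)
      finally show ?thesis .
    qed
    have P: "a1 j k + a2 k j = (if j = k then b j * x j * v u else 0)" if j: "j < n" and k: "k < n" for j k
    proof (cases "j = k")
      case True
      have jl: "j < length u" using j \<open>length u = n\<close> by simp
      have sq: "sg u j * c * (sg u j * d * e) = c * d * e" for c d e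
      proof -
        have "sg u j * c * (sg u j * d * e) = (sg u j * sg u j) * (c * d * e)" by (simp only: mult_ac)
        thus ?thesis by (simp add: sg_sq)
      qed
      have "a1 j j = (if u!j then 0 else b j * x j * v u)"
      proof (cases "u!j")
        case False
        hence "u[j:=True, j:=False] = u" by (metis list_update_id list_update_overwrite)
        thus ?thesis unfolding a1_def using False jl by (simp add: sg_upd_ge sq)
      qed (simp add: a1_def)
      moreover have "a2 j j = (if u!j then b j * x j * v u else 0)"
      proof (cases "u!j")
        case True
        hence "u[j:=False, j:=True] = u" by (metis list_update_id list_update_overwrite)
        thus ?thesis unfolding a2_def using True jl by (simp add: sg_upd_ge mult_ac sg_sq)
      qed (simp add: a2_def)
      ultimately show ?thesis using True by simp
    next
      case False
      show ?thesis
      proof (cases "\<not> u!j \<and> u!k")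
        case c: True
        have s: "sg u j * sg (u[j:=True]) k = - (sg u k * sg (u[k:=False]) j)"
          by (rule sg_swap) (use c j k False \<open>length u = n\<close> in auto)
        have w: "u[j:=True, k:=False] = u[k:=False, j:=True]" by (rule list_update_swap) (use False in auto)
        have 1: "a1 j k = (sg u j * sg (u[j:=True]) k) * (b j * x k * v (u[k:=False, j:=True]))"
          unfolding a1_def w using c False k \<open>length u = n\<close> by (simp add: mult_ac nth_list_update)
        have 2: "a2 k j = (sg u k * sg (u[k:=False]) j) * (b j * x k * v (u[k:=False, j:=True]))"
          unfolding a2_def using c False j \<open>length u = n\<close> by (simp add: mult_ac nth_list_update)
        show ?thesis unfolding 1 2 s using False by simp
      next
        case c: False
        thus ?thesis using False j k \<open>length u = n\<close> by (auto simp: a1_def a2_def nth_list_update)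
      qed
    qed
    have "ctr n b (wedge n x v) u + wedge n x (ctr n b v) u = (\<Sum>j<n. \<Sum>k<n. a1 j k + a2 k j)"
      unfolding L R by (simp add: sum.distrib)
    also have "\<dots> = (\<Sum>j<n. \<Sum>k<n. if j = k then b j * x j * v u else 0)"
      by (intro sum.cong refl) (simp add: P)
    also have "\<dots> = (\<Sum>i<n. b i * x i) * v u"
      by (simp add: sum_distrib_right)
    finally show ?thesis by (simp add: algebra_simps)
  qed
qed



definition lin :: "(vec \<Rightarrow> vec) \<Rightarrow> bool" where
 "lin A \<longleftrightarrow> (\<forall>v1 v2. A (\<lambda>u. v1 u + v2 u) = (\<lambda>u. A v1 u + A v2 u)) \<and> (\<forall>c v. A (\<lambda>u. c * v u) = (\<lambda>u. c * A v u))"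

lemma wedge_add_v: "wedge n x (\<lambda>u. v1 u + v2 u) = (\<lambda>u. wedge n x v1 u + wedge n x v2 u)"
  unfolding fun_eq_iff by (auto simp: wedge_def sum.distrib[symmetric] algebra_simps intro!: sum.cong)
lemma wedge_smult_v: "wedge n x (\<lambda>u. c * v u) = (\<lambda>u. c * wedge n x v u)"
  unfolding fun_eq_iff by (auto simp: wedge_def sum_distrib_left algebra_simps intro!: sum.cong)
lemma wedge_neg_v: "wedge n x (\<lambda>u. - v u) = (\<lambda>u. - wedge n x v u)"
  unfolding fun_eq_iff by (auto simp: wedge_def sum_negf[symmetric] algebra_simps intro!: sum.cong)
lemma wedge_diff_v: "wedge n x (\<lambda>u. v1 u - v2 u) = (\<lambda>u. wedge n x v1 u - wedge n x v2 u)"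
proof -
  have "wedge n x (\<lambda>u. v1 u - v2 u) = wedge n x (\<lambda>u. v1 u + (\<lambda>u. - v2 u) u)" by simp
  also have "\<dots> = (\<lambda>u. wedge n x v1 u - wedge n x v2 u)" by (simp only: wedge_add_v wedge_neg_v) simp
  finally show ?thesis .
qed
lemma wedge_zero_v: "wedge n x (\<lambda>u. 0) = (\<lambda>u. 0)"
  unfolding wedge_def fun_eq_iff apply simp
  apply (intro allI impI sum.neutral ballI) by simp
lemma wedge_add_x: "wedge n (\<lambda>j. x j + y j) v = (\<lambda>u. wedge n x v u + wedge n y v u)"
  unfolding fun_eq_iff by (auto simp: wedge_def sum.distrib[symmetric] algebra_simps intro!: sum.cong)
lemma wedge_smult_x: "wedge n (\<lambda>j. c * x j) v = (\<lambda>u. c * wedge n x v u)"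
  unfolding fun_eq_iff by (auto simp: wedge_def sum_distrib_left algebra_simps intro!: sum.cong)
lemma wedge_cong: "(\<And>j. j < n \<Longrightarrow> x j = y j) \<Longrightarrow> wedge n x v = wedge n y v"
  unfolding wedge_def by (intro ext if_cong refl sum.cong) auto
lemma wedge_Vn: "wedge n x v \<in> Vn n" by (simp add: Vn_def wedge_def)

lemma ctr_add_v: "ctr n b (\<lambda>u. v1 u + v2 u) = (\<lambda>u. ctr n b v1 u + ctr n b v2 u)"
  unfolding fun_eq_iff by (auto simp: ctr_def sum.distrib[symmetric] algebra_simps intro!: sum.cong)
lemma ctr_smult_v: "ctr n b (\<lambda>u. c * v u) = (\<lambda>u. c * ctr n b v u)"
  unfolding fun_eq_iff by (auto simp: ctr_def sum_distrib_left algebra_simps intro!: sum.cong)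
lemma ctr_zero_v: "ctr n b (\<lambda>u. 0) = (\<lambda>u. 0)"
  unfolding ctr_def fun_eq_iff apply simp
  apply (intro allI impI sum.neutral ballI) by simp
lemma ctr_Vn: "ctr n b v \<in> Vn n" by (simp add: Vn_def ctr_def)

lemma lin_wedge: "lin (wedge n x)" by (simp add: lin_def wedge_add_v wedge_smult_v)
lemma lin_ctr: "lin (ctr n b)" by (simp add: lin_def ctr_add_v ctr_smult_v)

lemma wedge_anti: "wedge n x (wedge n a y) = (\<lambda>u. - wedge n a (wedge n x y) u)"
proof -
  have "wedge n (\<lambda>j. x j + a j) (wedge n (\<lambda>j. x j + a j) y) = (\<lambda>u. 0)" by (rule wedge_wedge)
  hence "(\<lambda>u. wedge n x (wedge n x y) u + wedge n x (wedge n a y) u + (wedge n a (wedge n x y) u + wedge n a (wedge n a y) u)) = (\<lambda>u. 0)"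
    by (simp add: wedge_add_x wedge_add_v)
  hence "(\<lambda>u. wedge n x (wedge n a y) u + wedge n a (wedge n x y) u) = (\<lambda>u. 0)"
    by (simp add: wedge_wedge)
  thus ?thesis by (auto simp: fun_eq_iff add_eq_0_iff)
qed

definition intw :: "nat \<Rightarrow> (vec \<Rightarrow> vec) \<Rightarrow> ((nat \<Rightarrow> K) \<Rightarrow> (nat \<Rightarrow> K)) \<Rightarrow> bool" where
 "intw n A g \<longleftrightarrow> (\<forall>v\<in>Vn n. A v \<in> Vn n) \<and> (\<forall>x. \<forall>v\<in>Vn n. A (wedge n x v) = wedge n (g x) (A v))"

lemma intw_gen: "intw n (\<lambda>v u. lam * (v u + wedge n a (ctr n b v) u)) (\<lambda>x j. x j + (\<Sum>i<n. b i * x i) * a j)"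
  unfolding intw_def
proof (intro conjI ballI allI)
  fix v assume "v \<in> Vn n"
  thus "(\<lambda>u. lam * (v u + wedge n a (ctr n b v) u)) \<in> Vn n" by (simp add: Vn_def wedge_def)
next
  fix x v assume v: "v \<in> Vn n"
  define \<beta> where "\<beta> = (\<Sum>i<n. b i * x i)"
  have "wedge n a (ctr n b (wedge n x v)) = (\<lambda>u. \<beta> * wedge n a v u - wedge n a (wedge n x (ctr n b v)) u)"
    unfolding ctr_wedge[OF v] \<beta>_def[symmetric] by (simp add: wedge_diff_v wedge_smult_v)
  hence lhs: "(\<lambda>u. lam * (wedge n x v u + wedge n a (ctr n b (wedge n x v)) u)) =
    (\<lambda>u. lam * (wedge n x v u + \<beta> * wedge n a v u - wedge n a (wedge n x (ctr n b v)) u))"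
    by (simp add: algebra_simps)
  have "wedge n (\<lambda>j. x j + \<beta> * a j) (\<lambda>u. lam * (v u + wedge n a (ctr n b v) u)) =
     (\<lambda>u. lam * (wedge n x v u + wedge n x (wedge n a (ctr n b v)) u) +
          \<beta> * (lam * (wedge n a v u + wedge n a (wedge n a (ctr n b v)) u)))"
    by (simp add: wedge_add_x wedge_smult_x wedge_add_v wedge_smult_v)
  also have "\<dots> = (\<lambda>u. lam * (wedge n x v u + \<beta> * wedge n a v u - wedge n a (wedge n x (ctr n b v)) u))"
    by (simp add: wedge_wedge wedge_anti[of n x a] algebra_simps)
  finally show "(\<lambda>u. lam * (wedge n x v u + wedge n a (ctr n b (wedge n x v)) u)) =
     wedge n (\<lambda>j. x j + (\<Sum>i<n. b i * x i) * a j) (\<lambda>u. lam * (v u + wedge n a (ctr n b v) u))"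
    unfolding lhs \<beta>_def by simp
qed

lemma intw_comp: "intw n A g \<Longrightarrow> intw n B h \<Longrightarrow> intw n (A \<circ> B) (g \<circ> h)"
  by (simp add: intw_def)

lemma intw_id: "intw n id id" by (simp add: intw_def)

lemma intw_fold:
  "(\<And>t acc g. t \<in> set ts \<Longrightarrow> intw n acc g \<Longrightarrow> intw n (FF t acc) (GG t g)) \<Longrightarrow> intw n A0 g0 \<Longrightarrow>
   intw n (fold FF ts A0) (fold GG ts g0)"
proof (induction ts arbitrary: A0 g0)
  case Nil thus ?case by simp
next
  case (Cons t ts) 
  have h: "intw n (FF t A0) (GG t g0)" using Cons.prems by auto
  have "intw n (fold FF ts (FF t A0)) (fold GG ts (GG t g0))"
    by (rule Cons.IH) (use Cons.prems h in auto)
  thus ?case by simp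
qed

lemma intw_funpow: "intw n A g \<Longrightarrow> intw n (A ^^ m) (g ^^ m)"
  by (induction m) (simp_all add: intw_id[unfolded id_def] intw_comp[unfolded comp_def] intw_def)

lemma lin_comp: "lin A \<Longrightarrow> lin B \<Longrightarrow> lin (A \<circ> B)" by (simp add: lin_def)
lemma lin_id: "lin id" by (simp add: lin_def)
lemma lin_fold: "(\<And>t acc. t \<in> set ts \<Longrightarrow> lin acc \<Longrightarrow> lin (FF t acc)) \<Longrightarrow> lin A0 \<Longrightarrow> lin (fold FF ts A0)"
  by (induction ts arbitrary: A0) auto
lemma lin_funpow: "lin A \<Longrightarrow> lin (A ^^ m)"
  by (induction m) (auto simp: lin_def)



lemma qq_ne0: "qq \<noteq> 0" unfolding qq_def by (simp add: eq_fract Zero_fract_def)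
lemma qpa: "qq powi a * qq powi b = qq powi (a + b)" by (rule power_int_add[symmetric]) (simp add: qq_ne0)

lemma sum_two: "a < (n::nat) \<Longrightarrow> b < n \<Longrightarrow> a \<noteq> b \<Longrightarrow> (\<And>j. j < n \<Longrightarrow> j \<noteq> a \<Longrightarrow> j \<noteq> b \<Longrightarrow> f j = 0) \<Longrightarrow> (\<Sum>j<n. f j) = f a + (f b :: K)"
proof -
  assume h: "a < n" "b < n" "a \<noteq> b" "\<And>j. j < n \<Longrightarrow> j \<noteq> a \<Longrightarrow> j \<noteq> b \<Longrightarrow> f j = 0"
  have "(\<Sum>j<n. f j) = (\<Sum>j\<in>{a,b}. f j)"
    by (rule sum.mono_neutral_right) (auto intro: h(4) simp: h(1,2))
  thus ?thesis using h by simp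
qed

lemma upd2_eq: "a < length u \<Longrightarrow> b < length u \<Longrightarrow> a \<noteq> b \<Longrightarrow>
   (u[a:=x, b:=y] = u[a:=x', b:=y']) = (x = x' \<and> y = y')"
  by (metis nth_list_update_eq nth_list_update_neq length_list_update)

lemma finite_basis: "finite (basis n)"
proof -
  have "basis n = {xs. set xs \<subseteq> UNIV \<and> length xs = n}" by (simp add: basis_def)
  thus ?thesis using finite_lists_length_eq[of "UNIV :: bool set" n] by simp
qed

lemma basis_sum4:
  assumes u: "length u = n" and ab: "a < n" "b < n" "a \<noteq> b"
  shows "(\<Sum>w\<in>basis n. (if (\<forall>j<n. j \<noteq> a \<and> j \<noteq> b \<longrightarrow> u!j = w!j) then g w else 0)) =
     g (u[a:=False,b:=False]) + g (u[a:=False,b:=True]) + g (u[a:=True,b:=False]) + (g (u[a:=True,b:=True]) :: K)"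
proof -
  let ?P = "\<lambda>w. (\<forall>j<n. j \<noteq> a \<and> j \<noteq> b \<longrightarrow> u!j = w!j)"
  have "(\<Sum>w\<in>basis n. (if ?P w then g w else 0)) = (\<Sum>w\<in>{w\<in>basis n. ?P w}. g w)"
    by (rule sum.inter_filter[symmetric]) (rule finite_basis)
  also have "{w\<in>basis n. ?P w} = {u[a:=False,b:=False], u[a:=False,b:=True], u[a:=True,b:=False], u[a:=True,b:=True]}"
  proof (intro equalityI subsetI)
    fix w assume w: "w \<in> {w\<in>basis n. ?P w}"
    have "w = u[a:=w!a, b:=w!b]"
      by (rule nth_equalityI) (use w u ab in \<open>auto simp: basis_def nth_list_update\<close>)
    thus "w \<in> {u[a:=False,b:=False], u[a:=False,b:=True], u[a:=True,b:=False], u[a:=True,b:=True]}"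
      by (cases "w!a"; cases "w!b") auto
  next
    fix w assume "w \<in> {u[a:=False,b:=False], u[a:=False,b:=True], u[a:=True,b:=False], u[a:=True,b:=True]}"
    thus "w \<in> {w\<in>basis n. ?P w}" using u ab by (auto simp: basis_def nth_list_update)
  qed
  also have "(\<Sum>w\<in>{u[a:=False,b:=False], u[a:=False,b:=True], u[a:=True,b:=False], u[a:=True,b:=True]}. g w) =
     g (u[a:=False,b:=False]) + g (u[a:=False,b:=True]) + g (u[a:=True,b:=False]) + g (u[a:=True,b:=True])"
    using u ab by (simp add: upd2_eq)
  finally show ?thesis .
qed

definition rr :: "nat \<Rightarrow> nat \<Rightarrow> K" where
  "rr t j = (if j = t - 1 then 1 else if j = t then - inverse qq else 0)"



lemma upd_id: "xs ! i = x \<Longrightarrow> xs[i := x] = xs" by (metis list_update_id)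

lemma sg_sq2: "sg u j * (sg u j * x) = x" by (simp add: mult.assoc[symmetric] sg_sq)

lemma mif: "(if P then (x::K) else 0) * y = (if P then x * y else 0)" by simp

lemma Phi_sigma_eq:
  assumes t: "1 \<le> t" "t < n" and v: "v \<in> Vn n"
  shows "Phi_sigma n t v = (\<lambda>u. qq * (v u + wedge n (\<lambda>j. - rr t j) (ctr n (rr t) v) u))"
proof
  fix u show "Phi_sigma n t v u = qq * (v u + wedge n (\<lambda>j. - rr t j) (ctr n (rr t) v) u)"
  proof (cases "length u = n")
    case False thus ?thesis using v by (simp add: Phi_sigma_def wedge_app0 Vn_def)
  next
    case True
    obtain a where a: "t = Suc a" using t by (cases t) auto
    have an: "a < n" "Suc a < n" "a \<noteq> Suc a" using t a by auto
    have rra: "rr t a = 1" and rrt: "rr t (Suc a) = - inverse qq" using a by (auto simp: rr_def)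
    have rr0: "j \<noteq> a \<Longrightarrow> j \<noteq> Suc a \<Longrightarrow> rr t j = 0" for j using a by (auto simp: rr_def)
    have ctrE: "ctr n (rr t) v u' = (if u'!a then 0 else sg u' a * v (u'[a:=True])) +
        (if u'!Suc a then 0 else sg u' (Suc a) * (- inverse qq) * v (u'[Suc a:=True]))" if "length u' = n" for u'
    proof -
      have "ctr n (rr t) v u' = (\<Sum>j<n. if u'!j then 0 else sg u' j * rr t j * v (u'[j:=True]))"
        by (rule ctr_app[OF that])
      also have "\<dots> = (if u'!a then 0 else sg u' a * rr t a * v (u'[a:=True])) +
        (if u'!Suc a then 0 else sg u' (Suc a) * rr t (Suc a) * v (u'[Suc a:=True]))"
        by (rule sum_two) (use an rr0 in auto)
      finally show ?thesis by (simp add: rra rrt)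
    qed
    have wedE: "wedge n (\<lambda>j. - rr t j) y u = (if u!a then - (sg u a * y (u[a:=False])) else 0) +
        (if u!Suc a then sg u (Suc a) * inverse qq * y (u[Suc a:=False]) else 0)" for y
    proof -
      have "wedge n (\<lambda>j. - rr t j) y u = (\<Sum>j<n. if u!j then sg u j * - rr t j * y (u[j:=False]) else 0)"
        by (rule wedge_app[OF True])
      also have "\<dots> = (if u!a then sg u a * - rr t a * y (u[a:=False]) else 0) +
        (if u!Suc a then sg u (Suc a) * - rr t (Suc a) * y (u[Suc a:=False]) else 0)"
        by (rule sum_two) (use an rr0 in auto)
      finally show ?thesis by (simp add: rra rrt)
    qed
    have lhs: "Phi_sigma n t v u = (\<Sum>w\<in>basis n. (if (\<forall>j<n. j \<noteq> a \<and> j \<noteq> Suc a \<longrightarrow> u!j = w!j)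
        then Rmat (u!a, u!Suc a) (w!a, w!Suc a) * v w else 0))"
      unfolding Phi_sigma_def a using True by (simp add: mif cong: if_cong)
    also have "\<dots> = Rmat (u!a, u!Suc a) (False, False) * v (u[a:=False, Suc a:=False]) +
       Rmat (u!a, u!Suc a) (False, True) * v (u[a:=False, Suc a:=True]) +
       Rmat (u!a, u!Suc a) (True, False) * v (u[a:=True, Suc a:=False]) +
       Rmat (u!a, u!Suc a) (True, True) * v (u[a:=True, Suc a:=True])"
      by (subst basis_sum4[OF True an]) (use True an in \<open>simp add: nth_list_update\<close>)
    finally have L: "Phi_sigma n t v u = \<dots>" .
    have len: "a < length u" "Suc a < length u" using True an by auto
    have sw: "xs[Suc a := y, a := x] = xs[a:=x, Suc a:=y]" for xs :: "bool list" and x y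
      by (rule list_update_swap) simp
    note simps = L wedE ctrE True sg_upd_ge sg_upd_lt len an sg_Suc sg_sq sg_sq2 upd_id nth_list_update list_update_overwrite sw
       Rmat_def
    show ?thesis
    proof (cases "u!a"; cases "u!Suc a")
      assume c: "u!a" "u!Suc a"
      have e: "u[a:=True, Suc a:=True] = u" using c by (simp add: upd_id)
      show ?thesis using c qq_ne0 by (simp add: simps e list_update_same_conv field_simps)
    next
      assume c: "u!a" "\<not> u!Suc a"
      have e: "u[a:=True, Suc a:=False] = u" using c by (simp add: upd_id)
      show ?thesis using c qq_ne0 by (simp add: simps e list_update_same_conv field_simps)
    next
      assume c: "\<not> u!a" "u!Suc a"
      have e: "u[a:=False, Suc a:=True] = u" using c by (simp add: upd_id)
      show ?thesis using c qq_ne0 by (simp add: simps e list_update_same_conv field_simps)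
    next
      assume c: "\<not> u!a" "\<not> u!Suc a"
      have e: "u[a:=False, Suc a:=False] = u" using c by (simp add: upd_id)
      show ?thesis using c qq_ne0 by (simp add: simps e list_update_same_conv field_simps)
    qed
  qed
qed



lemma intw_cong: "(\<And>v. v \<in> Vn n \<Longrightarrow> A v = B v) \<Longrightarrow> intw n A g = intw n B g"
  unfolding intw_def by (simp add: wedge_Vn)

definition gt :: "nat \<Rightarrow> nat \<Rightarrow> (nat \<Rightarrow> K) \<Rightarrow> (nat \<Rightarrow> K)" where
  "gt n t x = (\<lambda>j. x j + (\<Sum>i<n. rr t i * x i) * (- rr t j))"

lemma intw_sigma: "1 \<le> t \<Longrightarrow> t < n \<Longrightarrow> intw n (Phi_sigma n t) (gt n t)"
proof -
  assume t: "1 \<le> t" "t < n"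
  have "intw n (\<lambda>v u. qq * (v u + wedge n (\<lambda>j. - rr t j) (ctr n (rr t) v) u)) (gt n t)"
    using intw_gen[of n qq "\<lambda>j. - rr t j" "rr t"] unfolding gt_def by simp
  moreover have "intw n (Phi_sigma n t) (gt n t) = intw n (\<lambda>v u. qq * (v u + wedge n (\<lambda>j. - rr t j) (ctr n (rr t) v) u)) (gt n t)"
    by (rule intw_cong) (rule Phi_sigma_eq[OF t])
  ultimately show ?thesis by simp
qed

lemma lin_sigma: "lin (Phi_sigma n t)"
  unfolding lin_def Phi_sigma_def fun_eq_iff
  by (simp add: sum.distrib sum_distrib_left algebra_simps)

definition cvec :: "nat \<Rightarrow> (nat \<Rightarrow> K) \<Rightarrow> (nat \<Rightarrow> K)" where
  "cvec n = fold (\<lambda>t g. gt n t \<circ> g) [1..<n] id"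

lemma intw_cyc: "intw n (Phi_cyc n) (cvec n)"
  unfolding Phi_cyc_def cvec_def
proof (rule intw_fold)
  fix t acc g assume "t \<in> set [1..<n]" "intw n acc g"
  thus "intw n (Phi_sigma n t \<circ> acc) (gt n t \<circ> g)"
    by (intro intw_comp intw_sigma) auto
qed (rule intw_id)

lemma intw_tau: "intw n (Phi_tau n) (cvec n ^^ n)"
  unfolding Phi_tau_def by (rule intw_funpow) (rule intw_cyc)

lemma lin_cyc: "lin (Phi_cyc n)"
  unfolding Phi_cyc_def by (rule lin_fold) (auto intro: lin_comp lin_sigma lin_id)

lemma lin_tau: "lin (Phi_tau n)"
  unfolding Phi_tau_def by (rule lin_funpow) (rule lin_cyc)

definition vac :: "nat \<Rightarrow> vec" where "vac n = (\<lambda>u. if u = replicate n False then 1 else 0)"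

lemma vac_Vn: "(\<lambda>u. c * vac n u) \<in> Vn n" by (auto simp: Vn_def vac_def)

lemma ctr_vac: "ctr n b (\<lambda>u. c * vac n u) = (\<lambda>u. 0)"
proof
  fix u show "ctr n b (\<lambda>u. c * vac n u) u = 0"
  proof (cases "length u = n")
    case False thus ?thesis by (simp add: ctr_app0)
  next
    case True
    have "\<And>j. j < n \<Longrightarrow> u[j:=True] \<noteq> replicate n False"
      using True by (metis nth_list_update_eq nth_replicate)
    hence "\<forall>j\<in>{..<n}. (if u!j then 0 else sg u j * b j * (c * vac n (u[j:=True]))) = 0"
      by (simp add: vac_def)
    hence "(\<Sum>j<n. if u!j then 0 else sg u j * b j * (c * vac n (u[j:=True]))) = 0"
      by (rule sum.neutral)
    thus ?thesis using True by (simp add: ctr_app)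
  qed
qed

lemma sigma_vac: "1 \<le> t \<Longrightarrow> t < n \<Longrightarrow> Phi_sigma n t (\<lambda>u. c * vac n u) = (\<lambda>u. (qq * c) * vac n u)"
  by (simp add: Phi_sigma_eq vac_Vn ctr_vac wedge_zero_v mult.assoc)

lemma fold_vac:
  "(\<And>t acc d. t \<in> set ts \<Longrightarrow> (\<And>c. acc (\<lambda>u. c * vac n u) = (\<lambda>u. (d * c) * vac n u)) \<Longrightarrow>
       (\<And>c. FF t acc (\<lambda>u. c * vac n u) = (\<lambda>u. (qq * d * c) * vac n u))) \<Longrightarrow>
   (\<And>c. A0 (\<lambda>u. c * vac n u) = (\<lambda>u. (d * c) * vac n u)) \<Longrightarrow>
   fold FF ts A0 (\<lambda>u. c * vac n u) = (\<lambda>u. (qq ^ length ts * d * c) * vac n u)"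
proof (induction ts arbitrary: A0 d)
  case Nil thus ?case by simp
next
  case (Cons t ts)
  have "FF t A0 (\<lambda>u. c * vac n u) = (\<lambda>u. (qq * d * c) * vac n u)" for c
    using Cons.prems by auto
  hence "fold FF ts (FF t A0) (\<lambda>u. c * vac n u) = (\<lambda>u. (qq ^ length ts * (qq * d) * c) * vac n u)"
    by (intro Cons.IH) (use Cons.prems in auto)
  thus ?case by (simp add: mult_ac)
qed

lemma cyc_vac: "Phi_cyc n (\<lambda>u. c * vac n u) = (\<lambda>u. (qq ^ (n - 1) * c) * vac n u)"
proof -
  have "Phi_cyc n (\<lambda>u. c * vac n u) = (\<lambda>u. (qq ^ length [1..<n] * 1 * c) * vac n u)"
    unfolding Phi_cyc_def
  proof (rule fold_vac)
    fix t acc d c assume "t \<in> set [1..<n]" and h: "\<And>c. acc (\<lambda>u. c * vac n u) = (\<lambda>u. (d * c) * vac n u)"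
    hence t: "1 \<le> t" "t < n" by auto
    show "(Phi_sigma n t \<circ> acc) (\<lambda>u. c * vac n u) = (\<lambda>u. (qq * d * c) * vac n u)"
      using sigma_vac[OF t, of "d * c"] h by (simp add: mult.assoc)
  qed simp
  thus ?thesis by simp
qed

lemma tau_vac: "(Phi_cyc n ^^ m) (\<lambda>u. c * vac n u) = (\<lambda>u. (qq ^ ((n - 1) * m) * c) * vac n u)"
proof (induction m arbitrary: c)
  case 0 thus ?case by simp
next
  case (Suc m)
  have "(Phi_cyc n ^^ Suc m) (\<lambda>u. c * vac n u) = Phi_cyc n (\<lambda>u. (qq ^ ((n - 1) * m) * c) * vac n u)"
    using Suc by simp
  also have "\<dots> = (\<lambda>u. (qq ^ (n - 1) * (qq ^ ((n - 1) * m) * c)) * vac n u)" by (rule cyc_vac)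
  also have "\<dots> = (\<lambda>u. (qq ^ ((n - 1) * Suc m) * c) * vac n u)" by (simp add: power_add mult_ac)
  finally show ?case .
qed



definition dl :: "bool list \<Rightarrow> vec" where "dl w = (\<lambda>u. if u = w then 1 else 0)"

lemma dl_Vn: "length w = n \<Longrightarrow> dl w \<in> Vn n" by (auto simp: Vn_def dl_def)

lemma dl_wedge:
  assumes w: "length w = n" "i < n" "w!i" "\<forall>l<i. \<not> w!l"
  shows "wedge n (\<lambda>j. if j = i then 1 else 0) (dl (w[i:=False])) = dl w"
proof
  fix u show "wedge n (\<lambda>j. if j = i then 1 else 0) (dl (w[i:=False])) u = dl w u"
  proof (cases "length u = n")
    case False thus ?thesis using w by (auto simp: wedge_app0 dl_def)
  next
    case True
    have "wedge n (\<lambda>j. if j = i then 1 else 0) (dl (w[i:=False])) u =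
       (\<Sum>j<n. if j = i then (if u!i then sg u i * dl (w[i:=False]) (u[i:=False]) else 0) else 0)"
      unfolding wedge_app[OF True] by (intro sum.cong refl) auto
    also have "\<dots> = (if u!i then sg u i * dl (w[i:=False]) (u[i:=False]) else 0)"
      using w by (simp add: sum.delta)
    also have "\<dots> = dl w u"
    proof (cases "u = w")
      case True
      have "cnt w i = 0" unfolding cnt_def using w by auto
      thus ?thesis using True w by (simp add: dl_def sg_def)
    next
      case False
      have "\<not> (u!i \<and> u[i:=False] = w[i:=False])"
      proof
        assume h: "u!i \<and> u[i:=False] = w[i:=False]"
        have "u = u[i:=False, i:=True]" by (metis h list_update_overwrite upd_id)
        also have "\<dots> = w[i:=False, i:=True]" by (simp only: h[THEN conjunct2])
        also have "\<dots> = w" by (metis w(3) list_update_overwrite upd_id)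
        finally have "u = w" .
        thus False using False by simp
      qed
      thus ?thesis using False by (auto simp: dl_def)
    qed
    finally show ?thesis .
  qed
qed

lemma uniq_basis:
  assumes A: "intw n A g" and B: "intw n B h" and gh: "\<And>x j. j < n \<Longrightarrow> g x j = h x j"
    and Av: "A (vac n) = (\<lambda>u. c * vac n u)" and Bv: "B (vac n) = (\<lambda>u. c * vac n u)"
  shows "length w = n \<Longrightarrow> A (dl w) = B (dl w)"
proof (induction "cnt w n" arbitrary: w)
  case 0
  have "\<forall>i<n. \<not> w!i"
  proof (intro allI impI notI)
    fix i assume "i < n" "w!i"
    hence "i \<in> {i. i < n \<and> w!i}" by auto
    hence "cnt w n > 0" unfolding cnt_def by (metis card_gt_0_iff empty_iff finite_Collect_conjI finite_Collect_less_nat)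
    thus False using 0 by simp
  qed
  hence "w = replicate n False" using 0 by (intro nth_equalityI) auto
  hence "dl w = vac n" by (simp add: dl_def vac_def)
  thus ?case using Av Bv by simp
next
  case (Suc m)
  have "{i. i < n \<and> w!i} \<noteq> {}" using Suc(2) unfolding cnt_def by (metis card.empty nat.distinct(1))
  then obtain i0 where "i0 < n" "w!i0" by auto
  define i where "i = (LEAST i. w!i)"
  have wi: "w!i" unfolding i_def by (rule LeastI) (rule \<open>w!i0\<close>)
  have il: "i < n" using \<open>i0 < n\<close> Least_le[of "\<lambda>i. w!i" i0] \<open>w!i0\<close> unfolding i_def by simp
  have ib: "\<forall>l<i. \<not> w!l" unfolding i_def using not_less_Least by blast
  define w' where "w' = w[i:=False]"
  have lw': "length w' = n" using Suc(3) by (simp add: w'_def)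
  have "cnt w n = card {j. j < n \<and> j \<noteq> i \<and> w ! j} + 1" using cnt_split[OF il, of w] wi by simp
  moreover have "cnt w' n = card {j. j < n \<and> j \<noteq> i \<and> w ! j}"
  proof -
    have e: "{j. j < n \<and> j \<noteq> i \<and> w' ! j} = {j. j < n \<and> j \<noteq> i \<and> w ! j}"
      unfolding w'_def by (intro Collect_cong) (metis nth_list_update_neq)
    have "w' ! i = False" using il Suc(3) by (simp add: w'_def)
    thus ?thesis using cnt_split[OF il, of w'] e by simp
  qed
  ultimately have cw': "m = cnt w' n" using Suc(2) by simp
  have IH: "A (dl w') = B (dl w')" by (rule Suc(1)[OF cw' lw'])
  let ?d = "\<lambda>j. if j = i then 1 else (0::K)"
  have dw: "dl w = wedge n ?d (dl w')" unfolding w'_def by (rule dl_wedge[symmetric]) (use Suc(3) il wi ib in auto)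
  have "A (dl w) = wedge n (g ?d) (A (dl w'))" unfolding dw using A dl_Vn[OF lw'] by (simp add: intw_def)
  also have "\<dots> = wedge n (h ?d) (B (dl w'))" unfolding IH by (rule wedge_cong) (rule gh)
  also have "\<dots> = B (dl w)" unfolding dw using B dl_Vn[OF lw'] by (simp add: intw_def)
  finally show ?case .
qed

lemma lin_add: "lin A \<Longrightarrow> A (\<lambda>u. v1 u + v2 u) = (\<lambda>u. A v1 u + A v2 u)"
  unfolding lin_def by blast
lemma lin_smult: "lin A \<Longrightarrow> A (\<lambda>u. c * v u) = (\<lambda>u. c * A v u)"
  unfolding lin_def by blast

lemma lin_zero: assumes "lin A" shows "A (\<lambda>u. 0) = (\<lambda>u. 0)"
  using lin_smult[OF assms, of 0 "\<lambda>u. 0"] by simp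

lemma lin_sum: "finite S \<Longrightarrow> lin A \<Longrightarrow> A (\<lambda>u. \<Sum>w\<in>S. c w * f w u) = (\<lambda>u. \<Sum>w\<in>S. c w * A (f w) u)"
proof (induction S rule: finite_induct)
  case empty thus ?case by (simp add: lin_zero)
next
  case (insert x S)
  have "A (\<lambda>u. \<Sum>w\<in>insert x S. c w * f w u) = A (\<lambda>u. (\<lambda>u. c x * f x u) u + (\<lambda>u. \<Sum>w\<in>S. c w * f w u) u)"
    using insert.hyps by simp
  also have "\<dots> = (\<lambda>u. A (\<lambda>u. c x * f x u) u + A (\<lambda>u. \<Sum>w\<in>S. c w * f w u) u)"
    by (rule lin_add[OF insert.prems])
  also have "\<dots> = (\<lambda>u. c x * A (f x) u + (\<Sum>w\<in>S. c w * A (f w) u))"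
    using insert.IH[OF insert.prems] lin_smult[OF insert.prems] by simp
  finally show ?case using insert.hyps by simp
qed

lemma vec_expand: "v \<in> Vn n \<Longrightarrow> v = (\<lambda>u. \<Sum>w\<in>basis n. v w * dl w u)"
proof
  fix u assume v: "v \<in> Vn n"
  have "(\<Sum>w\<in>basis n. v w * dl w u) = (\<Sum>w\<in>basis n. if u = w then v u else 0)"
    by (intro sum.cong refl) (simp add: dl_def)
  also have "\<dots> = (if u \<in> basis n then v u else 0)" by (simp add: sum.delta finite_basis)
  also have "\<dots> = v u" using v by (auto simp: basis_def Vn_def)
  finally show "v u = (\<Sum>w\<in>basis n. v w * dl w u)" by simp
qed

lemma uniq:
  assumes "lin A" "lin B" "intw n A g" "intw n B h" "\<And>x j. j < n \<Longrightarrow> g x j = h x j"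
    "A (vac n) = (\<lambda>u. c * vac n u)" "B (vac n) = (\<lambda>u. c * vac n u)" "v \<in> Vn n"
  shows "A v = B v"
proof -
  have b: "\<And>w. w \<in> basis n \<Longrightarrow> A (dl w) = B (dl w)"
    using uniq_basis[OF assms(3-7)] by (simp add: basis_def)
  have "A v = A (\<lambda>u. \<Sum>w\<in>basis n. v w * dl w u)" using vec_expand[OF assms(8)] by simp
  also have "\<dots> = (\<lambda>u. \<Sum>w\<in>basis n. v w * A (dl w) u)" by (rule lin_sum[OF finite_basis assms(1)])
  also have "\<dots> = (\<lambda>u. \<Sum>w\<in>basis n. v w * B (dl w) u)" using b by simp
  also have "\<dots> = B (\<lambda>u. \<Sum>w\<in>basis n. v w * dl w u)" by (rule lin_sum[OF finite_basis assms(2), symmetric])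
  also have "\<dots> = B v" using vec_expand[OF assms(8)] by simp
  finally show ?thesis .
qed



definition wt :: "bool list \<Rightarrow> nat" where "wt u = cnt u (length u)"

lemma wt_upd: assumes "j < length u"
  shows "wt (u[j:=x]) + (if u!j then 1 else 0) = wt u + (if x then 1 else 0)"
proof -
  have e: "{i. i < length u \<and> i \<noteq> j \<and> u[j:=x] ! i} = {i. i < length u \<and> i \<noteq> j \<and> u ! i}"
    by (intro Collect_cong) (metis nth_list_update_neq)
  have "wt (u[j:=x]) = card {i. i < length u \<and> i \<noteq> j \<and> u ! i} + (if x then 1 else 0)"
    using cnt_split[OF assms, of "u[j:=x]"] e assms unfolding wt_def by simp
  moreover have "wt u = card {i. i < length u \<and> i \<noteq> j \<and> u ! i} + (if u!j then 1 else 0)"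
    using cnt_split[OF assms, of u] unfolding wt_def by simp
  ultimately show ?thesis by simp
qed

lemma wt_le: "wt u \<le> length u"
proof -
  have "wt u \<le> card {i. i < length u}" unfolding wt_def cnt_def by (rule card_mono) auto
  thus ?thesis by simp
qed

definition ee :: "nat \<Rightarrow> nat \<Rightarrow> K" where "ee n j = qq powi (int j - int n + 1)"
definition ff :: "nat \<Rightarrow> K" where "ff j = qq ^ j"
definition mu :: "nat \<Rightarrow> K" where "mu n = qq ^ n * (qq - inverse qq)"

definition Qs :: "nat \<Rightarrow> vec \<Rightarrow> vec" where
  "Qs n v = (\<lambda>u. qq ^ (n * (n - 1)) * qq powi (- (2 * int n * int (wt u))) * v u)"
definition A1 :: "nat \<Rightarrow> vec \<Rightarrow> vec" where
  "A1 n v = (\<lambda>u. 1 * (v u + wedge n (\<lambda>j. mu n * ff j) (ctr n (ee n) v) u))"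
definition Tm :: "nat \<Rightarrow> vec \<Rightarrow> vec" where "Tm n = Qs n \<circ> A1 n"
definition gT :: "nat \<Rightarrow> (nat \<Rightarrow> K) \<Rightarrow> (nat \<Rightarrow> K)" where
  "gT n x = (\<lambda>j. qq powi (- (2 * int n)) * (x j + (\<Sum>i<n. ee n i * x i) * (mu n * ff j)))"

lemma pw_F: assumes "j < length u" "u!j"
  shows "qq powi (- (2 * int n)) * qq powi (- (2 * int n * int (wt (u[j:=False])))) = qq powi (- (2 * int n * int (wt u)))"
proof -
  have "wt (u[j:=False]) + 1 = wt u" using wt_upd[OF assms(1), of False] assms(2) by simp
  hence e: "int (wt u) = int (wt (u[j:=False])) + 1" by linarith
  have "qq powi (- (2 * int n)) * qq powi (- (2 * int n * int (wt (u[j:=False])))) =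
    qq powi (- (2 * int n) + - (2 * int n * int (wt (u[j:=False]))))" by (rule qpa)
  also have "- (2 * int n) + - (2 * int n * int (wt (u[j:=False]))) = - (2 * int n * int (wt u))"
    unfolding e by (simp add: algebra_simps)
  finally show ?thesis .
qed

lemma intw_Qs: "intw n (Qs n) (\<lambda>x j. qq powi (- (2 * int n)) * x j)"
  unfolding intw_def
proof (intro conjI ballI allI)
  fix v assume "v \<in> Vn n" thus "Qs n v \<in> Vn n" by (simp add: Vn_def Qs_def)
next
  fix x v assume v: "v \<in> Vn n"
  show "Qs n (wedge n x v) = wedge n (\<lambda>j. qq powi (- (2 * int n)) * x j) (Qs n v)"
  proof
    fix u show "Qs n (wedge n x v) u = wedge n (\<lambda>j. qq powi (- (2 * int n)) * x j) (Qs n v) u"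
    proof (cases "length u = n")
      case False thus ?thesis by (simp add: Qs_def wedge_app0)
    next
      case True
      have "Qs n (wedge n x v) u = (\<Sum>j<n. qq ^ (n * (n - 1)) * qq powi (- (2 * int n * int (wt u))) *
          (if u!j then sg u j * x j * v (u[j:=False]) else 0))"
        by (simp add: Qs_def wedge_app[OF True] sum_distrib_left)
      also have "\<dots> = (\<Sum>j<n. if u!j then sg u j * (qq powi (- (2 * int n)) * x j) * Qs n v (u[j:=False]) else 0)"
      proof (rule sum.cong[OF refl])
        fix j assume j: "j \<in> {..<n}"
        show "qq ^ (n * (n - 1)) * qq powi (- (2 * int n * int (wt u))) *
          (if u!j then sg u j * x j * v (u[j:=False]) else 0) =
          (if u!j then sg u j * (qq powi (- (2 * int n)) * x j) * Qs n v (u[j:=False]) else 0)"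
        proof (cases "u!j")
          case c: True
          have "j < length u" using j True by simp
          from pw_F[OF this c, of n] show ?thesis using c
            by (simp add: Qs_def mult_ac)
        qed simp
      qed
      also have "\<dots> = wedge n (\<lambda>j. qq powi (- (2 * int n)) * x j) (Qs n v) u"
        by (rule wedge_app[OF True, symmetric])
      finally show ?thesis .
    qed
  qed
qed

lemma intw_A1: "intw n (A1 n) (\<lambda>x j. x j + (\<Sum>i<n. ee n i * x i) * (mu n * ff j))"
  unfolding A1_def using intw_gen[of n 1 "\<lambda>j. mu n * ff j" "ee n"] by simp

lemma intw_Tm: "intw n (Tm n) (gT n)"
proof -
  have "intw n (Qs n \<circ> A1 n) ((\<lambda>x j. qq powi (- (2 * int n)) * x j) \<circ> (\<lambda>x j. x j + (\<Sum>i<n. ee n i * x i) * (mu n * ff j)))"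
    by (rule intw_comp[OF intw_Qs intw_A1])
  thus ?thesis unfolding Tm_def gT_def comp_def by simp
qed

lemma lin_Tm: "lin (Tm n)"
proof -
  have "lin (Qs n)" unfolding lin_def Qs_def by (simp add: algebra_simps)
  moreover have "lin (A1 n)" unfolding lin_def A1_def
    by (simp add: ctr_add_v wedge_add_v ctr_smult_v wedge_smult_v algebra_simps)
  ultimately show ?thesis unfolding Tm_def by (rule lin_comp)
qed

lemma Tm_vac: "Tm n (vac n) = (\<lambda>u. qq ^ (n * (n - 1)) * vac n u)"
proof -
  have "ctr n (ee n) (vac n) = (\<lambda>u. 0)" using ctr_vac[of n "ee n" 1] by simp
  hence "A1 n (vac n) = vac n" by (simp add: A1_def wedge_zero_v)
  moreover have "wt (replicate n False) = 0" by (simp add: wt_def cnt_def)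
  ultimately show ?thesis by (auto simp: Tm_def Qs_def vac_def)
qed



definition pp :: K where "pp = inverse qq ^ 2"
definition Dm :: "(nat \<Rightarrow> K) \<Rightarrow> (nat \<Rightarrow> K)" where "Dm x = (\<lambda>j. qq ^ j * x j)"
definition gz :: "nat \<Rightarrow> (nat \<Rightarrow> K) \<Rightarrow> (nat \<Rightarrow> K)" where
  "gz t z = (\<lambda>j. if j = t - 1 then pp * z t else if j = t then z (t - 1) + (1 - pp) * z t else z j)"

lemma gt_Dm: assumes t: "1 \<le> t" "t < n" shows "Dm (gt n t x) = gz t (Dm x)"
proof
  fix j
  obtain a where a: "t = Suc a" using t by (cases t) auto
  have an: "a < n" "Suc a < n" using t a by auto
  have s: "(\<Sum>i<n. rr t i * x i) = x a - inverse qq * x (Suc a)"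
  proof -
    have "(\<Sum>i<n. rr t i * x i) = rr t a * x a + rr t (Suc a) * x (Suc a)"
      by (rule sum_two) (use an a in \<open>auto simp: rr_def\<close>)
    thus ?thesis using a by (simp add: rr_def)
  qed
  have q1: "qq ^ a * inverse qq = pp * (qq * qq ^ a)" by (simp add: pp_def field_simps qq_ne0 power2_eq_square)
  have q2: "qq * qq ^ a * inverse qq = qq ^ a" by (simp add: field_simps qq_ne0)
  show "Dm (gt n t x) j = gz t (Dm x) j"
    unfolding Dm_def gt_def gz_def s using a
    by (auto simp: rr_def algebra_simps q1 q2 pp_def power2_eq_square qq_ne0)
qed



definition czf :: "nat \<Rightarrow> (nat \<Rightarrow> K) \<Rightarrow> (nat \<Rightarrow> K)" where
  "czf n = fold (\<lambda>t g. gz t \<circ> g) [1..<n] id"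

lemma fold_Dm:
  "(\<And>t. t \<in> set ts \<Longrightarrow> 1 \<le> t \<and> t < n) \<Longrightarrow>
   Dm (fold (\<lambda>t g. gt n t \<circ> g) ts id x) = fold (\<lambda>t g. gz t \<circ> g) ts id (Dm x)"
proof (induction ts rule: rev_induct)
  case Nil thus ?case by simp
next
  case (snoc t ts)
  have t: "1 \<le> t" "t < n" using snoc.prems by auto
  have ih: "Dm (fold (\<lambda>t g. gt n t \<circ> g) ts id x) = fold (\<lambda>t g. gz t \<circ> g) ts id (Dm x)"
    by (rule snoc.IH) (use snoc.prems in auto)
  have "Dm (fold (\<lambda>t g. gt n t \<circ> g) (ts @ [t]) id x) = Dm (gt n t (fold (\<lambda>t g. gt n t \<circ> g) ts id x))"
    by simp
  also have "\<dots> = gz t (Dm (fold (\<lambda>t g. gt n t \<circ> g) ts id x))" by (rule gt_Dm[OF t])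
  also have "\<dots> = gz t (fold (\<lambda>t g. gz t \<circ> g) ts id (Dm x))" unfolding ih ..
  also have "\<dots> = fold (\<lambda>t g. gz t \<circ> g) (ts @ [t]) id (Dm x)" by simp
  finally show ?case .
qed

lemma Dm_cvec: "Dm (cvec n x) = czf n (Dm x)"
  unfolding cvec_def czf_def by (rule fold_Dm) auto

lemma czf_fold_expl:
  "fold (\<lambda>t g. gz t \<circ> g) [1..<Suc m] id z j =
    (if j < m then pp * z (Suc j) else if j = m then z 0 + (1 - pp) * (\<Sum>i<m. z (Suc i)) else z j)"
proof (induction m arbitrary: j)
  case 0 thus ?case by simp
next
  case (Suc m)
  define y where "y = fold (\<lambda>t g. gz t \<circ> g) [1..<Suc m] id z"
  have yj: "y j = (if j < m then pp * z (Suc j) else if j = m then z 0 + (1 - pp) * (\<Sum>i<m. z (Suc i)) else z j)" for j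
    unfolding y_def by (rule Suc.IH)
  have e: "fold (\<lambda>t g. gz t \<circ> g) [1..<Suc (Suc m)] id z = gz (Suc m) y"
    unfolding y_def by (simp del: upt_Suc add: upt_Suc_append)
  show ?case unfolding e by (auto simp: gz_def yj algebra_simps)
qed

definition zc :: "nat \<Rightarrow> (nat \<Rightarrow> K) \<Rightarrow> (nat \<Rightarrow> K)" where
  "zc n z = (\<lambda>i. pp * z (Suc i mod n) + (1 - pp) * (\<Sum>j<n. z j) * (if i = n - 1 then 1 else 0))"

lemma czf_zc: assumes "1 \<le> n" "i < n" shows "czf n z i = zc n z i"
proof -
  obtain m where m: "n = Suc m" using assms by (cases n) auto
  have "czf n z i = (if i < m then pp * z (Suc i) else if i = m then z 0 + (1 - pp) * (\<Sum>i<m. z (Suc i)) else z i)"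
    unfolding czf_def m by (rule czf_fold_expl)
  moreover have "(\<Sum>j<n. z j) = z 0 + (\<Sum>i<m. z (Suc i))" unfolding m by (rule sum.lessThan_Suc_shift)
  ultimately show ?thesis
  proof (cases "i < m")
    case True
    hence "Suc i mod n = Suc i" using m by simp
    thus ?thesis using True \<open>czf n z i = _\<close> by (simp add: zc_def m)
  next
    case False
    hence im: "i = m" using assms m by simp
    hence "Suc i mod n = 0" using m by simp
    thus ?thesis using im \<open>czf n z i = _\<close> \<open>(\<Sum>j<n. z j) = _\<close> m by (simp add: zc_def algebra_simps)
  qed
qed

lemma zc_cong: "(\<And>j. j < n \<Longrightarrow> z j = z' j) \<Longrightarrow> 1 \<le> n \<Longrightarrow> zc n z i = zc n z' i"
  unfolding zc_def by simp

lemma sum_rot: assumes "1 \<le> n" shows "(\<Sum>i<n. z (Suc i mod n)) = (\<Sum>i<n. z i :: K)"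
proof -
  obtain m where m: "n = Suc m" using assms by (cases n) auto
  have "(\<Sum>i<Suc m. z (Suc i mod Suc m)) = (\<Sum>i<m. z (Suc i mod Suc m)) + z (Suc m mod Suc m)"
    by (rule sum.lessThan_Suc)
  also have "(\<Sum>i<m. z (Suc i mod Suc m)) = (\<Sum>i<m. z (Suc i))" by (intro sum.cong) auto
  also have "(\<Sum>i<m. z (Suc i)) + z (Suc m mod Suc m) = (\<Sum>i<Suc m. z i)"
    by (subst sum.lessThan_Suc_shift) (simp add: add.commute)
  finally show ?thesis using m by simp
qed

lemma zc_sum: assumes "1 \<le> n" shows "(\<Sum>i<n. zc n z i) = (\<Sum>i<n. z i)"
proof -
  define S where "S = (\<Sum>j<n. z j)"
  define c where "c = (1 - pp) * S"
  have e: "zc n z i = pp * z (Suc i mod n) + c * (if i = n - 1 then 1 else 0)" for i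
    by (simp add: zc_def S_def c_def)
  have "(\<Sum>i<n. zc n z i) = (\<Sum>i<n. pp * z (Suc i mod n)) + (\<Sum>i<n. c * (if i = n - 1 then 1 else 0))"
    unfolding e by (rule sum.distrib)
  also have "(\<Sum>i<n. pp * z (Suc i mod n)) = pp * S"
    unfolding S_def sum_distrib_left[symmetric] sum_rot[OF assms] ..
  also have "(\<Sum>i<n. c * (if i = n - 1 then 1 else 0)) = (\<Sum>i<n. if i = n - 1 then c else 0)"
    by (intro sum.cong) auto
  also have "\<dots> = c" using assms by (simp add: sum.delta)
  finally show ?thesis by (simp add: c_def S_def algebra_simps)
qed

lemma zc_pow_sum: "1 \<le> n \<Longrightarrow> (\<Sum>i<n. (zc n ^^ m) z i) = (\<Sum>i<n. z i)"
  by (induction m) (simp_all add: zc_sum)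

lemma zc_pow: assumes n: "1 \<le> n" shows "i < n \<Longrightarrow> (zc n ^^ m) z i =
   pp ^ m * z ((i + m) mod n) + (1 - pp) * (\<Sum>j<n. z j) * (\<Sum>k<m. pp ^ k * (if (i + k) mod n = n - 1 then 1 else 0))"
proof (induction m arbitrary: i)
  case 0 thus ?case by simp
next
  case (Suc m)
  let ?S = "\<Sum>j<n. z j"
  have i1: "Suc i mod n < n" using n by simp
  have h1: "(zc n ^^ Suc m) z i = pp * (zc n ^^ m) z (Suc i mod n) + (1 - pp) * ?S * (if i = n - 1 then 1 else 0)"
    using zc_pow_sum[OF n, of m z] by (simp add: zc_def)
  have h2: "(zc n ^^ m) z (Suc i mod n) = pp ^ m * z ((i + Suc m) mod n) +
      (1 - pp) * ?S * (\<Sum>k<m. pp ^ k * (if (i + Suc k) mod n = n - 1 then 1 else 0))"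
    using Suc.IH[OF i1] by (simp add: mod_add_left_eq)
  have h3: "(\<Sum>k<Suc m. pp ^ k * (if (i + k) mod n = n - 1 then 1 else 0)) =
      (if i = n - 1 then 1 else 0) + pp * (\<Sum>k<m. pp ^ k * (if (i + Suc k) mod n = n - 1 then 1 else 0))"
    unfolding sum.lessThan_Suc_shift using Suc.prems by (simp add: sum_distrib_left mult_ac)
  show ?case unfolding h1 h2 h3 by (simp add: algebra_simps)
qed

lemma mod_cond: assumes "i < (n::nat)" "k < n" shows "((i + k) mod n = n - 1) = (k = n - 1 - i)"
proof (cases "i + k < n")
  case True
  hence "(i + k) mod n = i + k" by simp
  thus ?thesis using assms True by auto
next
  case False
  hence "(i + k) mod n = i + k - n" using assms by (simp add: le_mod_geq)
  thus ?thesis using assms False by auto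
qed

lemma zc_pow_n: assumes "1 \<le> n" "i < n"
  shows "(zc n ^^ n) z i = pp ^ n * z i + (1 - pp) * (\<Sum>j<n. z j) * pp ^ (n - 1 - i)"
proof -
  have "(\<Sum>k<n. pp ^ k * (if (i + k) mod n = n - 1 then 1 else 0)) = (\<Sum>k<n. if k = n - 1 - i then pp ^ k else 0)"
  proof (rule sum.cong[OF refl])
    fix k assume "k \<in> {..<n}"
    hence e: "((i + k) mod n = n - 1) = (k = n - 1 - i)" using mod_cond assms by auto
    show "pp ^ k * (if (i + k) mod n = n - 1 then 1 else 0) = (if k = n - 1 - i then pp ^ k else 0)"
      unfolding e by simp
  qed
  also have "\<dots> = pp ^ (n - 1 - i)" using assms by (simp add: sum.delta)
  finally show ?thesis using zc_pow[OF assms(1) assms(2), of n z] assms by simp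
qed

lemma Dm_cvec_pow: "Dm ((cvec n ^^ m) x) = (czf n ^^ m) (Dm x)"
  by (induction m) (simp_all add: Dm_cvec)

lemma czf_pow_zc: assumes "1 \<le> n" shows "i < n \<Longrightarrow> (czf n ^^ m) z i = (zc n ^^ m) z i"
proof (induction m arbitrary: i)
  case 0 thus ?case by simp
next
  case (Suc m)
  have "(czf n ^^ Suc m) z i = zc n ((czf n ^^ m) z) i" using czf_zc[OF assms Suc.prems] by simp
  also have "\<dots> = zc n ((zc n ^^ m) z) i" by (rule zc_cong) (use Suc.IH assms in auto)
  finally show ?case by simp
qed



lemma qpa2: "qq powi a * (qq powi b * c) = qq powi (a + b) * c"
  by (simp add: mult.assoc[symmetric] qpa)

lemma pp_pow: "pp ^ k = qq powi (- 2 * int k)"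
proof -
  have "pp = qq powi (- 2)" by (simp add: pp_def power_int_minus power_inverse)
  hence "pp ^ k = (qq powi (- 2)) ^ k" by simp
  also have "\<dots> = qq powi (- 2 * int k)" by (rule power_int_power')
  finally show ?thesis .
qed

lemma qq_pow_powi: "qq ^ k = qq powi (int k)" by simp

lemma cvec_pow_gT:
  assumes n: "1 \<le> n" and j: "j < n"
  shows "(cvec n ^^ n) x j = gT n x j"
proof -
  define S where "S = (\<Sum>i<n. qq ^ i * x i)"
  have A: "qq ^ j * (cvec n ^^ n) x j = pp ^ n * (qq ^ j * x j) + (1 - pp) * S * pp ^ (n - 1 - j)"
  proof -
    have "qq ^ j * (cvec n ^^ n) x j = Dm ((cvec n ^^ n) x) j" by (simp add: Dm_def)
    also have "\<dots> = (czf n ^^ n) (Dm x) j" by (simp add: Dm_cvec_pow)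
    also have "\<dots> = (zc n ^^ n) (Dm x) j" by (rule czf_pow_zc[OF n j])
    also have "\<dots> = pp ^ n * Dm x j + (1 - pp) * (\<Sum>i<n. Dm x i) * pp ^ (n - 1 - j)"
      by (rule zc_pow_n[OF n j])
    finally show ?thesis by (simp add: Dm_def S_def)
  qed
  have pm: "qq powi (- int k) = inverse qq ^ k" for k by (simp add: power_int_minus power_inverse)
  have ee_eq: "ee n i = qq ^ i * inverse qq ^ (n - 1)" for i
  proof -
    have e: "int i - int n + 1 = int i + - int (n - 1)" using n by simp
    show ?thesis unfolding ee_def e qpa[symmetric] pm by simp
  qed
  have se: "(\<Sum>i<n. ee n i * x i) = inverse qq ^ (n - 1) * S"
    unfolding S_def sum_distrib_left ee_eq by (simp add: mult_ac)
  have g2: "qq powi (- (2 * int n)) = inverse qq ^ (2 * n)" using pm[of "2 * n"] by simp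
  obtain r where r: "n = Suc (j + r)" using j by (metis add_Suc_right less_iff_Suc_add)
  have B: "qq ^ j * gT n x j = pp ^ n * (qq ^ j * x j) + (1 - pp) * S * pp ^ (n - 1 - j)"
  proof -
    have "qq ^ j * gT n x j = qq ^ j * (inverse qq ^ (2 * n) * (x j + (inverse qq ^ (n - 1) * S) * (qq ^ n * (qq - inverse qq) * qq ^ j)))"
      by (simp only: gT_def se g2 mu_def ff_def)
    also have "\<dots> = pp ^ n * (qq ^ j * x j) + (1 - pp) * S * pp ^ (n - 1 - j)"
      unfolding pp_def r
      by (simp add: field_simps qq_ne0 power_add power_mult_distrib power2_eq_square mult_2_right)
    finally show ?thesis .
  qed
  have nz: "qq ^ j \<noteq> 0" by (simp add: qq_ne0)
  have "qq ^ j * (cvec n ^^ n) x j = qq ^ j * gT n x j" using A B by simp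
  thus ?thesis using nz qq_ne0 by simp
qed



lemma sum_single: "finite S \<Longrightarrow> w0 \<in> S \<Longrightarrow> (\<And>w. w \<in> S \<Longrightarrow> w \<noteq> w0 \<Longrightarrow> f w = 0) \<Longrightarrow> sum f S = (f w0 :: K)"
proof -
  assume h: "finite S" "w0 \<in> S" "\<And>w. w \<in> S \<Longrightarrow> w \<noteq> w0 \<Longrightarrow> f w = 0"
  have "sum f S = sum f {w0}" by (rule sum.mono_neutral_right) (use h in auto)
  thus ?thesis by simp
qed

lemma tens_odd:
  assumes X: "X = replicate j (qh1 al al) @ B # replicate m (qh1 ga ga)"
    and B: "B = ((\<lambda>y x. if y = y0 \<and> x = x0 then 1 else 0), True)" and yx: "y0 \<noteq> x0"
    and u: "length u = j + 1 + m"
  shows "tens_app X v u = (if u!j = y0 then sg u j * ((qq powi al) ^ j * (qq powi ga) ^ m) * v (u[j:=x0]) else 0)"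
proof -
  let ?n = "j + 1 + m"
  have lX: "length X = ?n" using X by simp
  have Xk: "X ! k = (if k < j then qh1 al al else if k = j then B else qh1 ga ga)" if "k < ?n" for k
    using that unfolding X by (auto simp: nth_append nth_Cons' )
  have card: "card {(i, k). i < k \<and> k < length X \<and> snd (X ! k) \<and> w ! i} = cnt w j" for w
  proof -
    have "{(i, k). i < k \<and> k < length X \<and> snd (X ! k) \<and> w ! i} = (\<lambda>i. (i, j)) ` {i. i < j \<and> w ! i}"
      using Xk lX B by (auto simp: qh1_def split: if_splits)
    thus ?thesis unfolding cnt_def by (simp add: card_image inj_on_def)
  qed
  have prod: "(\<Prod>k<?n. fst (X ! k) (u ! k) (w ! k)) =
      (if w = u[j:=x0] \<and> u!j = y0 then (qq powi al) ^ j * (qq powi ga) ^ m else 0)" if w: "length w = ?n" for w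
  proof (cases "w = u[j:=x0] \<and> u!j = y0")
    case True
    have "(\<Prod>k<?n. fst (X ! k) (u ! k) (w ! k)) = (\<Prod>k<?n. if k < j then qq powi al else if k = j then 1 else qq powi ga)"
      by (intro prod.cong refl) (use True u Xk B in \<open>auto simp: qh1_def nth_list_update\<close>)
    also have "\<dots> = (\<Prod>k<j. qq powi al) * (\<Prod>k\<in>{j..<?n}. if k = j then 1 else qq powi ga)"
    proof -
      let ?f = "\<lambda>k. if k < j then qq powi al else if k = j then 1 else qq powi ga"
      have e: "{..<?n} = {..<j} \<union> {j..<?n}" by auto
      have "(\<Prod>k\<in>{..<j} \<union> {j..<?n}. ?f k) = (\<Prod>k\<in>{..<j}. ?f k) * (\<Prod>k\<in>{j..<?n}. ?f k)"
        by (rule prod.union_disjoint) auto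
      moreover have "(\<Prod>k\<in>{..<j}. ?f k) = (\<Prod>k<j. qq powi al)" by (intro prod.cong) auto
      moreover have "(\<Prod>k\<in>{j..<?n}. ?f k) = (\<Prod>k\<in>{j..<?n}. if k = j then 1 else qq powi ga)"
        by (intro prod.cong) auto
      ultimately show ?thesis unfolding e by simp
    qed
    also have "(\<Prod>k\<in>{j..<?n}. if k = j then 1 else qq powi ga) = (\<Prod>k\<in>{Suc j..<?n}. qq powi ga)"
    proof -
      have "{j..<?n} = insert j {Suc j..<?n}" by auto
      thus ?thesis by simp
    qed
    finally show ?thesis using True by simp
  next
    case False
    have "\<exists>k\<in>{..<?n}. fst (X ! k) (u ! k) (w ! k) = 0"
    proof (cases "u!j = y0")
      case c: True
      hence ne: "w \<noteq> u[j:=x0]" using False by simp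
      have "\<exists>k<?n. w!k \<noteq> u[j:=x0]!k"
      proof (rule ccontr)
        assume "\<not> (\<exists>k<?n. w!k \<noteq> u[j:=x0]!k)"
        hence "\<forall>k<?n. w!k = u[j:=x0]!k" by simp
        hence "w = u[j:=x0]" using w u by (intro nth_equalityI) auto
        thus False using ne by simp
      qed
      then obtain k where k: "k < ?n" "w!k \<noteq> u[j:=x0]!k" by blast
      show ?thesis
      proof (cases "k = j")
        case True thus ?thesis using k Xk B u by (intro bexI[of _ k]) (auto simp: nth_list_update)
      next
        case False thus ?thesis using k Xk u by (intro bexI[of _ k]) (auto simp: qh1_def nth_list_update)
      qed
    next
      case False
      thus ?thesis using Xk B by (intro bexI[of _ j]) auto
    qed
    hence P0: "(\<Prod>k<?n. fst (X ! k) (u ! k) (w ! k)) = 0" by (intro prod_zero) simp_all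
    show ?thesis by (subst if_not_P[OF False]) (rule P0)
  qed
  have "tens_app X v u = (\<Sum>w\<in>basis ?n. tens_mat X u w * v w)"
    unfolding tens_app_def using lX u by simp
  also have "\<dots> = tens_mat X u (u[j:=x0]) * v (u[j:=x0])"
    by (rule sum_single[OF finite_basis]) (use u prod in \<open>auto simp: basis_def tens_mat_def lX\<close>)
  also have "\<dots> = (if u!j = y0 then sg u j * ((qq powi al) ^ j * (qq powi ga) ^ m) * v (u[j:=x0]) else 0)"
  proof -
    have p: "(\<Prod>k<?n. fst (X ! k) (u ! k) (u[j:=x0] ! k)) = (if u!j = y0 then (qq powi al) ^ j * (qq powi ga) ^ m else 0)"
      using prod[of "u[j:=x0]"] u by simp
    show ?thesis unfolding tens_mat_def card unfolding lX p by (simp add: sg_def cnt_upd_ge)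
  qed
  finally show ?thesis .
qed



lemma DeltaE_eq: "DeltaE (Suc m) = map (\<lambda>j. replicate j id1 @ E1 # replicate (m - j) Kinv1) [0..<Suc m]"
proof (induction m)
  case 0 thus ?case by simp
next
  case (Suc m)
  have "DeltaE (Suc (Suc m)) = map (\<lambda>t. t @ [Kinv1]) (DeltaE (Suc m)) @ [replicate (Suc m) id1 @ [E1]]" by simp
  also have "map (\<lambda>t. t @ [Kinv1]) (DeltaE (Suc m)) = map (\<lambda>j. replicate j id1 @ E1 # replicate (Suc m - j) Kinv1) [0..<Suc m]"
    unfolding Suc map_map by (intro map_cong refl) (auto simp: Suc_diff_le replicate_append_same)
  finally show ?case by simp
qed

lemma DeltaF_eq: "DeltaF (Suc m) = map (\<lambda>j. replicate j K1 @ F1 # replicate (m - j) id1) [0..<Suc m]"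
proof (induction m)
  case 0 thus ?case by simp
next
  case (Suc m)
  have "DeltaF (Suc (Suc m)) = map (\<lambda>t. t @ [id1]) (DeltaF (Suc m)) @ [replicate (Suc m) K1 @ [F1]]" by simp
  also have "map (\<lambda>t. t @ [id1]) (DeltaF (Suc m)) = map (\<lambda>j. replicate j K1 @ F1 # replicate (Suc m - j) id1) [0..<Suc m]"
    unfolding Suc map_map by (intro map_cong refl) (auto simp: Suc_diff_le replicate_append_same)
  finally show ?case by simp
qed

lemma sum_list_upt0: "sum_list (map f [0..<n]) = (\<Sum>j<n. f j :: K)"
  by (simp add: sum_set_upt_conv_sum_list_nat[symmetric] atLeast0LessThan)

lemma tens_app_len: "length u \<noteq> length X \<Longrightarrow> tens_app X v u = 0" by (simp add: tens_app_def)

lemma Eop_eq: assumes n: "1 \<le> n" shows "Eop n v = ctr n (ee n) v"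
proof
  fix u
  obtain m where m: "n = Suc m" using n by (cases n) auto
  have "Eop n v u = (\<Sum>j<n. tens_app (replicate j id1 @ E1 # replicate (m - j) Kinv1) v u)"
    unfolding Eop_def sum_app_def m DeltaE_eq map_map comp_def by (rule sum_list_upt0)
  also have "\<dots> = ctr n (ee n) v u"
  proof (cases "length u = n")
    case False thus ?thesis by (simp add: tens_app_len ctr_app0 m)
  next
    case True
    show ?thesis unfolding ctr_app[OF True]
    proof (rule sum.cong[OF refl])
      fix j assume j: "j \<in> {..<n}"
      have "tens_app (replicate j id1 @ E1 # replicate (m - j) Kinv1) v u =
        (if u!j = False then sg u j * ((qq powi 0) ^ j * (qq powi (-1)) ^ (m - j)) * v (u[j:=True]) else 0)"
        by (rule tens_odd[where B=E1]) (use True j m in \<open>auto simp: id1_def Kinv1_def E1_def\<close>)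
      moreover have "(qq powi (-1)) ^ (m - j) = ee n j"
        unfolding ee_def power_int_power' using j m by simp
      ultimately show "tens_app (replicate j id1 @ E1 # replicate (m - j) Kinv1) v u =
         (if u!j then 0 else sg u j * ee n j * v (u[j:=True]))" by simp
    qed
  qed
  finally show "Eop n v u = ctr n (ee n) v u" .
qed

lemma Fop_eq: assumes n: "1 \<le> n" shows "Fop n v = wedge n ff v"
proof
  fix u
  obtain m where m: "n = Suc m" using n by (cases n) auto
  have "Fop n v u = (\<Sum>j<n. tens_app (replicate j K1 @ F1 # replicate (m - j) id1) v u)"
    unfolding Fop_def sum_app_def m DeltaF_eq map_map comp_def by (rule sum_list_upt0)
  also have "\<dots> = wedge n ff v u"
  proof (cases "length u = n")
    case False thus ?thesis by (simp add: tens_app_len wedge_app0 m)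
  next
    case True
    show ?thesis unfolding wedge_app[OF True]
    proof (rule sum.cong[OF refl])
      fix j assume j: "j \<in> {..<n}"
      have "tens_app (replicate j K1 @ F1 # replicate (m - j) id1) v u =
        (if u!j = True then sg u j * ((qq powi 1) ^ j * (qq powi 0) ^ (m - j)) * v (u[j:=False]) else 0)"
        by (rule tens_odd[where B=F1]) (use True j m in \<open>auto simp: id1_def K1_def F1_def\<close>)
      thus "tens_app (replicate j K1 @ F1 # replicate (m - j) id1) v u =
         (if u!j then sg u j * ff j * v (u[j:=False]) else 0)" by (simp add: ff_def)
    qed
  qed
  finally show "Fop n v u = wedge n ff v u" .
qed

lemma qhop_eq: "qhop n a b v u = (if length u = n then (\<Prod>k<n. if u!k then qq powi b else qq powi a) * v u else 0)"
proof (cases "length u = n")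
  case False thus ?thesis by (simp add: qhop_def tens_app_len)
next
  case True
  let ?X = "replicate n (qh1 a b)"
  have prod: "(\<Prod>k<n. fst (?X ! k) (u ! k) (w ! k)) = (if w = u then (\<Prod>k<n. if u!k then qq powi b else qq powi a) else 0)"
    if w: "length w = n" for w
  proof (cases "w = u")
    case True
    have "(\<Prod>k<n. fst (?X ! k) (u ! k) (w ! k)) = (\<Prod>k<n. if u!k then qq powi b else qq powi a)"
      by (rule prod.cong[OF refl]) (simp add: qh1_def True)
    thus ?thesis using True by simp
  next
    case False
    have "\<exists>k<n. w!k \<noteq> u!k"
    proof (rule ccontr)
      assume "\<not> (\<exists>k<n. w!k \<noteq> u!k)"
      hence "w = u" using w \<open>length u = n\<close> by (intro nth_equalityI) auto
      thus False using False by simp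
    qed
    then obtain k where k: "k < n" "w!k \<noteq> u!k" by blast
    have "(\<Prod>k<n. fst (?X ! k) (u ! k) (w ! k)) = 0"
      by (rule prod_zero) (use k in \<open>auto simp: qh1_def intro!: bexI[of _ k]\<close>)
    thus ?thesis using False by simp
  qed
  have card: "card {(i, k). i < k \<and> k < length ?X \<and> snd (?X ! k) \<and> w ! i} = 0" for w
  proof -
    have e: "{(i, k). i < k \<and> k < length ?X \<and> snd (?X ! k) \<and> w ! i} = {}" by (auto simp: qh1_def)
    show ?thesis unfolding e by (rule card.empty)
  qed
  have "qhop n a b v u = (\<Sum>w\<in>basis n. tens_mat ?X u w * v w)"
    unfolding qhop_def tens_app_def using True by simp
  also have "\<dots> = tens_mat ?X u u * v u"
    by (rule sum_single[OF finite_basis]) (use True prod in \<open>auto simp: basis_def tens_mat_def\<close>)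
  also have "\<dots> = (\<Prod>k<n. if u!k then qq powi b else qq powi a) * v u"
    unfolding tens_mat_def card using prod[of u] True by simp
  finally show ?thesis using True by simp
qed



lemma prod_wt: assumes "length u = n"
  shows "(\<Prod>k<n. if u!k then B else A) = B ^ wt u * (A::K) ^ (n - wt u)"
proof -
  have fin: "finite {..<n}" by simp
  have c1: "card ({..<n} \<inter> {k. u!k}) = wt u"
    unfolding wt_def cnt_def assms by (rule arg_cong[where f=card]) auto
  have c2: "card ({..<n} \<inter> - {k. u!k}) = n - wt u"
  proof -
    have "{..<n} \<inter> - {k. u!k} = {..<n} - ({..<n} \<inter> {k. u!k})" by auto
    hence "card ({..<n} \<inter> - {k. u!k}) = card {..<n} - card ({..<n} \<inter> {k. u!k})"
      by (simp add: card_Diff_subset)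
    thus ?thesis using c1 by simp
  qed
  show ?thesis unfolding prod.If_cases[OF fin] using c1 c2 by simp
qed

lemma qhop_wt: "qhop n a b v u = (if length u = n then qq powi (a * (int n - int (wt u)) + b * int (wt u)) * v u else 0)"
proof (cases "length u = n")
  case True
  have w: "wt u \<le> n" using wt_le[of u] True by simp
  have "(qq powi b) ^ wt u * (qq powi a) ^ (n - wt u) = qq powi (b * int (wt u)) * qq powi (a * int (n - wt u))"
    by (simp add: power_int_power')
  also have "\<dots> = qq powi (a * (int n - int (wt u)) + b * int (wt u))"
    unfolding qpa using w by (simp add: algebra_simps of_nat_diff)
  finally show ?thesis using True by (simp add: qhop_eq prod_wt)
qed (simp add: qhop_eq)

definition supp :: "nat \<Rightarrow> vec \<Rightarrow> bool" where "supp m v \<longleftrightarrow> (\<forall>u. v u \<noteq> 0 \<longrightarrow> wt u = m)"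

lemma qq_pow_inj: "qq ^ m = qq ^ k \<Longrightarrow> m = k"
proof -
  have qp: "qq ^ m = Fract (monom 1 m) 1" for m
    unfolding qq_def by (induction m) (auto simp: eq_fract monom_Suc One_fract_def mult.commute)
  assume "qq ^ m = qq ^ k" thus "m = k" by (simp add: qp eq_fract monom_eq_iff')
qed

lemma H_char: assumes n: "1 \<le> n"
  shows "v \<in> H n k \<longleftrightarrow> v \<in> Vn n \<and> ctr n (ee n) v = (\<lambda>_. 0) \<and> supp k v"
proof
  assume h: "v \<in> H n k"
  hence v: "v \<in> Vn n" "Eop n v = (\<lambda>_. 0)" and q: "\<And>a b. qhop n a b v = smult_vec (qq powi (a * (int n - int k) + b * int k)) v"
    unfolding H_def by auto
  have "supp k v" unfolding supp_def
  proof (intro allI impI)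
    fix u assume vu: "v u \<noteq> 0"
    hence l: "length u = n" using v by (auto simp: Vn_def)
    have "qhop n 0 1 v u = smult_vec (qq powi (0 * (int n - int k) + 1 * int k)) v u" using q by simp
    hence "qq ^ wt u * v u = qq ^ k * v u" by (simp add: qhop_wt l smult_vec_def)
    hence "qq ^ wt u = qq ^ k" using vu by simp
    thus "wt u = k" by (rule qq_pow_inj)
  qed
  thus "v \<in> Vn n \<and> ctr n (ee n) v = (\<lambda>_. 0) \<and> supp k v" using v Eop_eq[OF n] by simp
next
  assume h: "v \<in> Vn n \<and> ctr n (ee n) v = (\<lambda>_. 0) \<and> supp k v"
  have "qhop n a b v = smult_vec (qq powi (a * (int n - int k) + b * int k)) v" for a b
  proof
    fix u show "qhop n a b v u = smult_vec (qq powi (a * (int n - int k) + b * int k)) v u"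
    proof (cases "v u = 0")
      case True thus ?thesis by (simp add: qhop_wt smult_vec_def)
    next
      case False
      hence "wt u = k" "length u = n" using h by (auto simp: supp_def Vn_def)
      thus ?thesis by (simp add: qhop_wt smult_vec_def)
    qed
  qed
  thus "v \<in> H n k" using h Eop_eq[OF n] unfolding H_def by simp
qed

lemma supp_wedge: assumes "supp m v" shows "supp (Suc m) (wedge n x v)"
  unfolding supp_def
proof (intro allI impI)
  fix u assume h: "wedge n x v u \<noteq> 0"
  hence l: "length u = n" by (metis wedge_app0)
  have "\<exists>j<n. u!j \<and> v (u[j:=False]) \<noteq> 0"
  proof (rule ccontr)
    assume "\<not> ?thesis"
    hence "wedge n x v u = 0" unfolding wedge_app[OF l] by (intro sum.neutral) auto
    thus False using h by simp
  qed
  then obtain j where j: "j < n" "u!j" "v (u[j:=False]) \<noteq> 0" by blast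
  hence "wt (u[j:=False]) = m" using assms by (simp add: supp_def)
  moreover have "wt (u[j:=False]) + 1 = wt u" using wt_upd[of j u False] j l by simp
  ultimately show "wt u = Suc m" by simp
qed

lemma supp_ctr: assumes "supp m v" "ctr n b v u \<noteq> 0" shows "Suc (wt u) = m"
proof -
  have l: "length u = n" using assms(2) by (metis ctr_app0)
  have "\<exists>j<n. \<not> u!j \<and> v (u[j:=True]) \<noteq> 0"
  proof (rule ccontr)
    assume "\<not> ?thesis"
    hence "ctr n b v u = 0" unfolding ctr_app[OF l] by (intro sum.neutral) auto
    thus False using assms(2) by simp
  qed
  then obtain j where j: "j < n" "\<not> u!j" "v (u[j:=True]) \<noteq> 0" by blast
  hence "wt (u[j:=True]) = m" using assms by (simp add: supp_def)
  moreover have "wt (u[j:=True]) = wt u + 1" using wt_upd[of j u True] j l by simp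
  ultimately show ?thesis by simp
qed

lemma supp_ctr_Suc: "supp (Suc m) v \<Longrightarrow> supp m (ctr n b v)"
  unfolding supp_def using supp_ctr[unfolded supp_def] by (metis Suc_inject)

lemma supp_ctr_0: "supp 0 v \<Longrightarrow> ctr n b v = (\<lambda>_. 0)"
  using supp_ctr by fastforce

lemma supp_smult: "supp m v \<Longrightarrow> supp m (\<lambda>u. c * v u)" by (simp add: supp_def)

lemma wedge_top: assumes "supp n v" shows "wedge n x v = (\<lambda>_. 0)"
proof
  fix u show "wedge n x v u = 0"
  proof (rule ccontr)
    assume h: "wedge n x v u \<noteq> 0"
    hence "wt u = Suc n" using supp_wedge[OF assms] by (simp add: supp_def)
    moreover have "length u = n" using h by (metis wedge_app0)
    ultimately show False using wt_le[of u] by simp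
  qed
qed

definition Rw :: "nat \<Rightarrow> vec \<Rightarrow> vec" where "Rw k v = (\<lambda>u. if wt u = k then v u else 0)"

lemma supp_Rw: "supp k (Rw k v)" by (simp add: supp_def Rw_def)
lemma Rw_Vn: "v \<in> Vn n \<Longrightarrow> Rw k v \<in> Vn n" by (simp add: Vn_def Rw_def)
lemma Rw_supp: "supp m v \<Longrightarrow> Rw k v = (if k = m then v else (\<lambda>_. 0))"
  by (auto simp: Rw_def supp_def fun_eq_iff)

definition ss :: "nat \<Rightarrow> K" where "ss n = (\<Sum>i<n. ee n i * ff i)"

lemma mu_ss: assumes "1 \<le> n" shows "1 + mu n * ss n = qq ^ (2 * n)"
proof -
  have ee_eq: "ee n i = qq ^ i * inverse qq ^ (n - 1)" for i
  proof -
    have pm: "qq powi (- int k) = inverse qq ^ k" for k by (simp add: power_int_minus power_inverse)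
    have e: "int i - int n + 1 = int i + - int (n - 1)" using assms by simp
    show ?thesis unfolding ee_def e qpa[symmetric] pm by simp
  qed
  have "ss n = inverse qq ^ (n - 1) * (\<Sum>i<n. (qq ^ 2) ^ i)"
    unfolding ss_def ee_eq ff_def sum_distrib_left by (intro sum.cong refl) (simp add: power_mult_distrib[symmetric] power_mult[symmetric] mult_ac power2_eq_square)
  hence "mu n * ss n = (qq ^ n * inverse qq ^ (n - 1)) * (qq - inverse qq) * (\<Sum>i<n. (qq ^ 2) ^ i)"
    by (simp add: mu_def mult_ac)
  also have "qq ^ n * inverse qq ^ (n - 1) = qq"
  proof -
    obtain m where "n = Suc m" using assms by (cases n) auto
    thus ?thesis by (simp add: qq_ne0 power_inverse[symmetric] field_simps)
  qed
  also have "qq * (qq - inverse qq) = qq ^ 2 - 1" by (simp add: qq_ne0 field_simps power2_eq_square)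
  also have "(qq ^ 2 - 1) * (\<Sum>i<n. (qq ^ 2) ^ i) = (qq ^ 2) ^ n - 1" by (rule power_diff_1_eq[symmetric])
  finally show ?thesis by (simp add: power_mult)
qed

lemma ss_ne0: assumes "1 \<le> n" shows "ss n \<noteq> 0"
proof
  assume "ss n = 0"
  hence "qq ^ (2 * n) = qq ^ 0" using mu_ss[OF assms] by simp
  hence "2 * n = 0" by (rule qq_pow_inj)
  thus False using assms by simp
qed

lemma EF: "v \<in> Vn n \<Longrightarrow> ctr n (ee n) (wedge n ff v) = (\<lambda>u. ss n * v u - wedge n ff (ctr n (ee n) v) u)"
  unfolding ss_def by (rule ctr_wedge)



lemma Phi_Tm: assumes "1 \<le> n" "v \<in> Vn n" shows "Phi_tau n v = Tm n v"
proof (rule uniq[where c = "qq ^ (n * (n - 1))" and A = "Phi_tau n" and B = "Tm n" and g = "cvec n ^^ n" and h = "gT n"])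
  show "lin (Phi_tau n)" by (rule lin_tau)
  show "lin (Tm n)" by (rule lin_Tm)
  show "intw n (Phi_tau n) (cvec n ^^ n)" by (rule intw_tau)
  show "intw n (Tm n) (gT n)" by (rule intw_Tm)
  show "\<And>x j. j < n \<Longrightarrow> (cvec n ^^ n) x j = gT n x j" by (rule cvec_pow_gT[OF assms(1)])
  show "Phi_tau n (vac n) = (\<lambda>u. qq ^ (n * (n - 1)) * vac n u)"
    using tau_vac[of n n 1] by (simp add: Phi_tau_def mult.commute)
  show "Tm n (vac n) = (\<lambda>u. qq ^ (n * (n - 1)) * vac n u)" by (rule Tm_vac)
  show "v \<in> Vn n" by (rule assms(2))
qed

lemma exp1: assumes "1 \<le> n"
  shows "qq ^ (n * (n - 1)) * qq powi (- (2 * int n * int k)) = qq powi (int n * (int n - 1 - 2 * int k))"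
proof -
  have "qq ^ (n * (n - 1)) * qq powi (- (2 * int n * int k)) = qq powi (int (n * (n - 1)) + - (2 * int n * int k))"
    by (simp only: qpa[symmetric] power_int_of_nat)
  also have "int (n * (n - 1)) + - (2 * int n * int k) = int n * (int n - 1 - 2 * int k)"
    using assms by (simp add: of_nat_diff algebra_simps)
  finally show ?thesis .
qed

lemma exp2: assumes "1 \<le> n"
  shows "qq ^ (n * (n - 1)) * qq powi (- (2 * int n * int (Suc k))) * qq ^ (2 * n) = qq powi (int n * (int n - 1 - 2 * int k))"
proof -
  have "qq ^ (n * (n - 1)) * qq powi (- (2 * int n * int (Suc k))) * qq ^ (2 * n) =
     qq powi (int (n * (n - 1)) + - (2 * int n * int (Suc k)) + int (2 * n))"
    by (simp only: qpa[symmetric] power_int_of_nat)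
  also have "int (n * (n - 1)) + - (2 * int n * int (Suc k)) + int (2 * n) = int n * (int n - 1 - 2 * int k)"
    using assms by (simp add: of_nat_diff algebra_simps)
  finally show ?thesis .
qed

lemma Tm_H: assumes n: "1 \<le> n" and x: "x \<in> H n k"
  shows "Tm n x = (\<lambda>u. qq powi (int n * (int n - 1 - 2 * int k)) * x u)"
proof -
  have c: "ctr n (ee n) x = (\<lambda>_. 0)" "supp k x" using x H_char[OF n] by auto
  have A: "A1 n x = x" unfolding A1_def c(1) wedge_zero_v by simp
  show ?thesis
  proof
    fix u
    have "Tm n x u = qq ^ (n * (n - 1)) * qq powi (- (2 * int n * int (wt u))) * x u"
      by (simp add: Tm_def A Qs_def)
    also have "\<dots> = qq powi (int n * (int n - 1 - 2 * int k)) * x u"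
    proof (cases "x u = 0")
      case False hence "wt u = k" using c(2) by (simp add: supp_def)
      thus ?thesis using exp1[OF n, of k] by simp
    qed simp
    finally show "Tm n x u = qq powi (int n * (int n - 1 - 2 * int k)) * x u" .
  qed
qed

lemma Tm_FH: assumes n: "1 \<le> n" and y: "y \<in> H n k"
  shows "Tm n (wedge n ff y) = (\<lambda>u. qq powi (int n * (int n - 1 - 2 * int k)) * wedge n ff y u)"
proof -
  have c: "y \<in> Vn n" "ctr n (ee n) y = (\<lambda>_. 0)" "supp k y" using y H_char[OF n] by auto
  have ef: "ctr n (ee n) (wedge n ff y) = (\<lambda>u. ss n * y u)"
    unfolding EF[OF c(1)] c(2) wedge_zero_v by simp
  have A: "A1 n (wedge n ff y) = (\<lambda>u. qq ^ (2 * n) * wedge n ff y u)"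
  proof -
    have "A1 n (wedge n ff y) = (\<lambda>u. wedge n ff y u + mu n * (ss n * wedge n ff y u))"
      unfolding A1_def ef by (simp add: wedge_smult_x wedge_smult_v)
    also have "\<dots> = (\<lambda>u. (1 + mu n * ss n) * wedge n ff y u)" by (simp add: algebra_simps)
    finally show ?thesis unfolding mu_ss[OF n] .
  qed
  have s: "supp (Suc k) (wedge n ff y)" by (rule supp_wedge[OF c(3)])
  show ?thesis
  proof
    fix u
    have "Tm n (wedge n ff y) u = qq ^ (n * (n - 1)) * qq powi (- (2 * int n * int (wt u))) * (qq ^ (2 * n) * wedge n ff y u)"
      by (simp add: Tm_def A Qs_def)
    also have "\<dots> = qq powi (int n * (int n - 1 - 2 * int k)) * wedge n ff y u"
    proof (cases "wedge n ff y u = 0")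
      case False hence "wt u = Suc k" using s by (simp add: supp_def)
      thus ?thesis using exp2[OF n, of k] by (simp add: mult_ac)
    qed simp
    finally show "Tm n (wedge n ff y) u = qq powi (int n * (int n - 1 - 2 * int k)) * wedge n ff y u" .
  qed
qed



definition xk :: "nat \<Rightarrow> vec \<Rightarrow> nat \<Rightarrow> vec" where
  "xk n v k = (\<lambda>u. inverse (ss n) * ctr n (ee n) (wedge n ff (Rw k v)) u)"
definition yk :: "nat \<Rightarrow> vec \<Rightarrow> nat \<Rightarrow> vec" where
  "yk n v k = (\<lambda>u. inverse (ss n) * ctr n (ee n) (Rw (Suc k) v) u)"
definition wsd :: "nat \<Rightarrow> vec \<Rightarrow> nat \<Rightarrow> vec" where
  "wsd n v k = (\<lambda>u. xk n v k u + wedge n ff (yk n v k) u)"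

lemma smult_Vn: "z \<in> Vn n \<Longrightarrow> (\<lambda>u. c * z u) \<in> Vn n" by (simp add: Vn_def)

lemma xk_H: assumes n: "1 \<le> n" shows "xk n v k \<in> H n k"
  unfolding H_char[OF n]
proof (intro conjI)
  show "xk n v k \<in> Vn n" unfolding xk_def by (rule smult_Vn) (rule ctr_Vn)
  show "ctr n (ee n) (xk n v k) = (\<lambda>_. 0)" unfolding xk_def ctr_smult_v ctr_ctr by simp
  show "supp k (xk n v k)" unfolding xk_def
    by (rule supp_smult, rule supp_ctr_Suc, rule supp_wedge, rule supp_Rw)
qed

lemma yk_H: assumes n: "1 \<le> n" shows "yk n v k \<in> H n k"
  unfolding H_char[OF n]
proof (intro conjI)
  show "yk n v k \<in> Vn n" unfolding yk_def by (rule smult_Vn) (rule ctr_Vn)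
  show "ctr n (ee n) (yk n v k) = (\<lambda>_. 0)" unfolding yk_def ctr_smult_v ctr_ctr by simp
  show "supp k (yk n v k)" unfolding yk_def
    by (rule supp_smult, rule supp_ctr_Suc, rule supp_Rw)
qed

lemma wsd_W: assumes n: "1 \<le> n" shows "wsd n v k \<in> W n k"
  unfolding W_def wsd_def Fop_eq[OF n, symmetric] using xk_H[OF n] yk_H[OF n] by blast

lemma Rw_sum_v: assumes "v \<in> Vn n" shows "(\<Sum>k<Suc n. Rw k v u) = v u"
proof (cases "length u = n")
  case True
  have "wt u < Suc n" using wt_le[of u] True by simp
  thus ?thesis by (simp add: Rw_def sum.delta')
next
  case False thus ?thesis using assms by (simp add: Rw_def Vn_def)
qed

lemma wsd_sum: assumes n: "1 \<le> n" and v: "v \<in> Vn n" shows "v = (\<lambda>u. \<Sum>k<n. wsd n v k u)"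
proof
  fix u
  let ?E = "ctr n (ee n)" and ?F = "wedge n ff" and ?R = "\<lambda>j. Rw j v"
  have ef: "?E (?F (?R j)) u + ?F (?E (?R j)) u = ss n * ?R j u" for j
    using EF[OF Rw_Vn[OF v], of j] by (simp add: fun_eq_iff)
  have top: "?E (?F (?R n)) u = 0" unfolding wedge_top[OF supp_Rw] ctr_zero_v by simp
  have bot: "?F (?E (?R 0)) u = 0" unfolding supp_ctr_0[OF supp_Rw] wedge_zero_v by simp
  have "ss n * v u = (\<Sum>k<Suc n. ss n * ?R k u)"
    by (subst Rw_sum_v[OF v, of u, symmetric]) (rule sum_distrib_left)
  also have "\<dots> = (\<Sum>k<Suc n. ?E (?F (?R k)) u) + (\<Sum>k<Suc n. ?F (?E (?R k)) u)"
    by (simp add: ef[symmetric] sum.distrib)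
  also have "(\<Sum>k<Suc n. ?E (?F (?R k)) u) = (\<Sum>k<n. ?E (?F (?R k)) u)" using top by simp
  also have "(\<Sum>k<Suc n. ?F (?E (?R k)) u) = (\<Sum>k<n. ?F (?E (?R (Suc k))) u)"
    unfolding sum.lessThan_Suc_shift using bot by simp
  finally have *: "ss n * v u = (\<Sum>k<n. ?E (?F (?R k)) u) + (\<Sum>k<n. ?F (?E (?R (Suc k))) u)" .
  have "(\<Sum>k<n. wsd n v k u) = inverse (ss n) * ((\<Sum>k<n. ?E (?F (?R k)) u) + (\<Sum>k<n. ?F (?E (?R (Suc k))) u))"
    by (simp add: wsd_def xk_def yk_def wedge_smult_v sum.distrib sum_distrib_left algebra_simps)
  also have "\<dots> = v u" unfolding *[symmetric] using ss_ne0[OF n] by simp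
  finally show "v u = (\<Sum>k<n. wsd n v k u)" by simp
qed

lemma supp_if: "supp j z \<Longrightarrow> (if wt u = k then z u else 0) = (if k = j then z u else 0)"
  by (auto simp: supp_def)

lemma wsd_uniq:
  assumes n: "1 \<le> n" and v: "v \<in> Vn n" and W: "\<forall>j<n. ws' j \<in> W n j" and vs: "v = (\<lambda>w. \<Sum>j<n. ws' j w)"
    and k: "k < n"
  shows "ws' k = wsd n v k"
proof -
  let ?E = "ctr n (ee n)" and ?F = "wedge n ff"
  have "\<forall>j. \<exists>p. j < n \<longrightarrow> fst p \<in> H n j \<and> snd p \<in> H n j \<and> ws' j = (\<lambda>w. fst p w + ?F (snd p) w)"
  proof
    fix j show "\<exists>p. j < n \<longrightarrow> fst p \<in> H n j \<and> snd p \<in> H n j \<and> ws' j = (\<lambda>w. fst p w + ?F (snd p) w)"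
    proof (cases "j < n")
      case True
      then obtain x y where "ws' j = (\<lambda>w. x w + Fop n y w)" "x \<in> H n j" "y \<in> H n j"
        using W unfolding W_def by blast
      thus ?thesis using Fop_eq[OF n] by (intro exI[of _ "(x, y)"]) simp
    qed simp
  qed
  hence "\<exists>P. \<forall>j. j < n \<longrightarrow> fst (P j) \<in> H n j \<and> snd (P j) \<in> H n j \<and> ws' j = (\<lambda>w. fst (P j) w + ?F (snd (P j)) w)"
    by (rule choice)
  then obtain P where P0: "\<forall>j. j < n \<longrightarrow> fst (P j) \<in> H n j \<and> snd (P j) \<in> H n j \<and> ws' j = (\<lambda>w. fst (P j) w + ?F (snd (P j)) w)" ..
  have P: "fst (P j) \<in> H n j \<and> snd (P j) \<in> H n j \<and> ws' j = (\<lambda>w. fst (P j) w + ?F (snd (P j)) w)" if "j < n" for j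
    using P0 that by blast
  define X where "X j = fst (P j)" for j
  define Y where "Y j = snd (P j)" for j
  have XH: "j < n \<Longrightarrow> X j \<in> H n j" and YH: "j < n \<Longrightarrow> Y j \<in> H n j"
    and wsj: "j < n \<Longrightarrow> ws' j = (\<lambda>w. X j w + ?F (Y j) w)" for j using P by (auto simp: X_def Y_def)
  have Xc: "j < n \<Longrightarrow> ?E (X j) = (\<lambda>_. 0) \<and> supp j (X j) \<and> X j \<in> Vn n" for j using XH H_char[OF n] by blast
  have Yc: "j < n \<Longrightarrow> ?E (Y j) = (\<lambda>_. 0) \<and> supp j (Y j) \<and> Y j \<in> Vn n" for j using YH H_char[OF n] by blast
  have Rw_v: "Rw m v u = (\<Sum>j<n. (if m = j then X j u else 0) + (if m = Suc j then ?F (Y j) u else 0))" for m u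
  proof -
    have "Rw m v u = (\<Sum>j<n. (if wt u = m then X j u else 0) + (if wt u = m then ?F (Y j) u else 0))"
      unfolding Rw_def vs using wsj by (auto intro!: sum.cong)
    also have "\<dots> = (\<Sum>j<n. (if m = j then X j u else 0) + (if m = Suc j then ?F (Y j) u else 0))"
    proof (rule sum.cong[OF refl])
      fix j assume "j \<in> {..<n}"
      hence "supp j (X j)" "supp (Suc j) (?F (Y j))" using Xc Yc supp_wedge by auto
      thus "(if wt u = m then X j u else 0) + (if wt u = m then ?F (Y j) u else 0) =
            (if m = j then X j u else 0) + (if m = Suc j then ?F (Y j) u else 0)"
        by (simp add: supp_if)
    qed
    finally show ?thesis .
  qed
  define Z where "Z = (if k = 0 then (\<lambda>_. 0) else Y (k - 1))"
  have Rk: "Rw k v = (\<lambda>u. X k u + ?F Z u)"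
  proof
    fix u
    have "Rw k v u = (\<Sum>j<n. if k = j then X j u else 0) + (\<Sum>j<n. if k = Suc j then ?F (Y j) u else 0)"
      unfolding Rw_v sum.distrib ..
    also have "(\<Sum>j<n. if k = j then X j u else 0) = X k u" using k by (simp add: sum.delta)
    also have "(\<Sum>j<n. if k = Suc j then ?F (Y j) u else 0) = ?F Z u"
    proof (cases k)
      case 0 thus ?thesis by (simp add: Z_def wedge_zero_v)
    next
      case (Suc k')
      hence "(\<Sum>j<n. if k = Suc j then ?F (Y j) u else 0) = (\<Sum>j<n. if k' = j then ?F (Y j) u else 0)" by simp
      also have "\<dots> = ?F (Y k') u" using k Suc by (simp add: sum.delta)
      finally show ?thesis using Suc by (simp add: Z_def)
    qed
    finally show "Rw k v u = X k u + ?F Z u" .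
  qed
  have RSk: "Rw (Suc k) v = (\<lambda>u. (if Suc k < n then X (Suc k) u else 0) + ?F (Y k) u)"
  proof
    fix u
    have "Rw (Suc k) v u = (\<Sum>j<n. if Suc k = j then X j u else 0) + (\<Sum>j<n. if Suc k = Suc j then ?F (Y j) u else 0)"
      unfolding Rw_v sum.distrib ..
    also have "(\<Sum>j<n. if Suc k = j then X j u else 0) = (if Suc k < n then X (Suc k) u else 0)" by (simp add: sum.delta)
    also have "(\<Sum>j<n. if Suc k = Suc j then ?F (Y j) u else 0) = ?F (Y k) u" using k by (simp add: sum.delta)
    finally show "Rw (Suc k) v u = (if Suc k < n then X (Suc k) u else 0) + ?F (Y k) u" .
  qed
  have xk: "xk n v k = X k"
  proof -
    have "?F (Rw k v) = (\<lambda>u. ?F (X k) u + ?F (?F Z) u)" unfolding Rk wedge_add_v ..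
    also have "\<dots> = ?F (X k)" unfolding wedge_wedge by simp
    finally have "?E (?F (Rw k v)) = (\<lambda>u. ss n * X k u)"
      using EF[of "X k" n] Xc[OF k] by (simp add: wedge_zero_v)
    thus ?thesis unfolding xk_def using ss_ne0[OF n] by (simp add: mult.assoc[symmetric])
  qed
  have yk: "yk n v k = Y k"
  proof -
    have e0: "?E (\<lambda>u. if Suc k < n then X (Suc k) u else 0) = (\<lambda>_. 0)"
    proof (cases "Suc k < n")
      case True thus ?thesis using Xc[OF True] by simp
    qed (simp add: ctr_zero_v)
    have "?E (Rw (Suc k) v) = (\<lambda>u. ss n * Y k u)"
      unfolding RSk ctr_add_v e0 using EF[of "Y k" n] Yc[OF k] by (simp add: wedge_zero_v)
    thus ?thesis unfolding yk_def using ss_ne0[OF n] by (simp add: mult.assoc[symmetric])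
  qed
  show ?thesis unfolding wsd_def xk yk wsj[OF k] ..
qed

lemma proj_eq: assumes n: "1 \<le> n" and v: "v \<in> Vn n" and k: "k < n" shows "proj n k v = wsd n v k"
  unfolding proj_def
proof (rule the_equality)
  show "\<exists>ws. (\<forall>j<n. ws j \<in> W n j) \<and> v = (\<lambda>w. \<Sum>j<n. ws j w) \<and> wsd n v k = ws k"
    using wsd_W[OF n] wsd_sum[OF n v] by blast
next
  fix x assume "\<exists>ws. (\<forall>j<n. ws j \<in> W n j) \<and> v = (\<lambda>w. \<Sum>j<n. ws j w) \<and> x = ws k"
  then obtain ws where "\<forall>j<n. ws j \<in> W n j" "v = (\<lambda>w. \<Sum>j<n. ws j w)" "x = ws k" by blast
  thus "x = wsd n v k" using wsd_uniq[OF n v _ _ k] by simp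
qed



theorem corollary4p3:
  fixes n :: nat
  assumes "n \<ge> 2"
  shows "\<forall>v \<in> Vn n. Phi_tau n v =
           (\<lambda>w. \<Sum>k<n. smult_vec (qq powi (int n * (int n - 1 - 2 * int k))) (proj n k v) w)"
proof
  fix v assume v: "v \<in> Vn n"
  have n: "1 \<le> n" using assms by simp
  define c where "c k = qq powi (int n * (int n - 1 - 2 * int k))" for k
  have eig: "Tm n (wsd n v k) = (\<lambda>u. c k * wsd n v k u)" for k
  proof -
    have "Tm n (wsd n v k) = (\<lambda>u. Tm n (xk n v k) u + Tm n (wedge n ff (yk n v k)) u)"
      unfolding wsd_def by (rule lin_add[OF lin_Tm])
    also have "\<dots> = (\<lambda>u. c k * xk n v k u + c k * wedge n ff (yk n v k) u)"
      by (simp add: Tm_H[OF n xk_H[OF n]] Tm_FH[OF n yk_H[OF n]] c_def)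
    finally show ?thesis by (simp add: wsd_def algebra_simps)
  qed
  have vs: "v = (\<lambda>u. \<Sum>k\<in>{..<n}. 1 * wsd n v k u)" using wsd_sum[OF n v] by simp
  have "Phi_tau n v = Tm n v" by (rule Phi_Tm[OF n v])
  also have "\<dots> = Tm n (\<lambda>u. \<Sum>k\<in>{..<n}. 1 * wsd n v k u)" using arg_cong[OF vs, of "Tm n"] .
  also have "\<dots> = (\<lambda>u. \<Sum>k\<in>{..<n}. 1 * Tm n (wsd n v k) u)" by (rule lin_sum[OF _ lin_Tm]) simp
  also have "\<dots> = (\<lambda>w. \<Sum>k<n. smult_vec (c k) (proj n k v) w)"
    using eig proj_eq[OF n v] by (simp add: smult_vec_def)
  finally show "Phi_tau n v = (\<lambda>w. \<Sum>k<n. smult_vec (qq powi (int n * (int n - 1 - 2 * int k))) (proj n k v) w)"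
    unfolding c_def .
qed


end
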